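(* Let $(G,Y)$ be a finite $C$-group with $Y=C_1\sqcup\dots\sqcup C_m$, and let $Y'=C_1\sqcup\dots\sqcup C_k$ be ample. Let $d=d_{Y'}$. If $s\in S(G,Y)^G$ satisfies $\tau_i(s)\ge 2n_ip_id+1$ for all $i\le k$, then $s$ can be written in the form $s=(x_{y_{k+1,1}}^{a_{k+1}}\cdots x_{y_{m,1}}^{a_m})\cdot s_{Y'}^d\cdot s_1$, where $a_i=\tau_i(s)$ for $i=k+1,\dots,m$ and $s_1\in S(G,Y)$ satisfies $\tau_i(s_1)=0$ for $i=k+1,\dots,m$.
   Context: A finite $C$-group is a pair $(G,Y)$ with $Y$ a finite conjugation-invariant subset of the group $G$, $1\notin Y$, such that $G$ has a presentation with generators the elements of $Y$ and defining relations all of the form $z^{-1}yz=y'$ ($y,y',z\in Y$). $Y=C_1\sqcup\dots\sqcup C_m$ is the decomposition into conjugacy classes of $G$, enumerated $C_i=\{y_{i,1},\dots,y_{i,n_i}\}$; $p_i$ is the least $p\ge1$ with $y^p$ central for $y\in C_i$. The factorization semigroup $S(G,Y)$ is generated by symbols $x_y$, $y\in Y$, subject to $x_{g_1}x_{g_2}=x_{g_2}x_{g_2^{-1}g_1g_2}=x_{g_1g_2g_1^{-1}}x_{g_1}$; $\alpha_G(x_y)=y$. For $s=x_{g_1}\cdots x_{g_n}$, $G_s$ is the subgroup generated by the $g_j$, $S(G,Y)^G=\{s:G_s=G\}$, $\tau_i(s)$ = number of factors of $s$ from $\{x_y:y\in C_i\}$. $Y'=C_1\sqcup\dots\sqcup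 C_k$ is ample if any two elements of $Y$ conjugate in $G$ are conjugate by an element of the subgroup generated by $Y'$. For conjugate $y,y'\in Y$, $d_{Y'}(y,y')$ is the least $r\ge0$ such that $y'=(z_1\cdots z_r)^{-1}y(z_1\cdots z_r)$ for some $z_1,\dots,z_r\in Y'$; $d_{Y'}$ is the maximum of $d_{Y'}(y,y')$ over all pairs of conjugate elements $y,y'\in Y$. $s_{Y'}=\prod_{i=1}^k\prod_{j=1}^{n_i}x_{y_{i,j}}^{p_i}$. *)

theory Defs
  imports "HOL-Algebra.Group" "HOL-Algebra.Generated_Groups"
begin

definition lprod :: "('a, 'b) monoid_scheme \<Rightarrow> 'a list \<Rightarrow> 'a" where
  "lprod G zs = foldr (\<lambda>x acc. x \<otimes>\<^bsub>G\<^esub> acc) zs \<one>\<^bsub>G\<^esub>"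

definition word_eval :: "('a, 'b) monoid_scheme \<Rightarrow> ('a \<times> bool) list \<Rightarrow> 'a" where
  "word_eval G w = lprod G (map (\<lambda>(y, b). if b then y else inv\<^bsub>G\<^esub> y) w)"

(* The congruence on words in Y^{\pm 1} defining the group presented by generators Y and
   all defining relations  z^{-1} y z = y'  (y, y', z in Y) valid in G:
   equality in the free group modulo the normal closure of these relators. *)
inductive pres_eq :: "('a, 'b) monoid_scheme \<Rightarrow> 'a set \<Rightarrow> ('a \<times> bool) list \<Rightarrow> ('a \<times> bool) list \<Rightarrow> bool"
  for G Y where
  pres_refl: "pres_eq G Y w w"
| pres_sym: "pres_eq G Y u w \<Longrightarrow> pres_eq G Y w u"
| pres_trans: "pres_eq G Y u v \<Longrightarrow> pres_eq G Y v w \<Longrightarrow> pres_eq G Y u w"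
| pres_cancel: "y \<in> Y \<Longrightarrow> pres_eq G Y (u @ [(y, b), (y, \<not> b)] @ v) (u @ v)"
| pres_rel: "y \<in> Y \<Longrightarrow> z \<in> Y \<Longrightarrow> y' \<in> Y \<Longrightarrow> y' = inv\<^bsub>G\<^esub> z \<otimes>\<^bsub>G\<^esub> y \<otimes>\<^bsub>G\<^esub> z \<Longrightarrow>
     pres_eq G Y (u @ [(z, False), (y, True), (z, True)] @ v) (u @ [(y', True)] @ v)"

definition finite_C_group :: "('a, 'b) monoid_scheme \<Rightarrow> 'a set \<Rightarrow> bool" where
  "finite_C_group G Y \<longleftrightarrow> group G \<and> Y \<subseteq> carrier G \<and> finite Y \<and> \<one>\<^bsub>G\<^esub> \<notin> Y
     \<and> (\<forall>y\<in>Y. \<forall>g\<in>carrier G. inv\<^bsub>G\<^esub> g \<otimes>\<^bsub>G\<^esub> y \<otimes>\<^bsub>G\<^esub> g \<in> Y)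
     \<and> generate G Y = carrier G
     \<and> (\<forall>w. set (map fst w) \<subseteq> Y \<longrightarrow> word_eval G w = \<one>\<^bsub>G\<^esub> \<longrightarrow> pres_eq G Y w [])"

definition conjugate_in :: "('a, 'b) monoid_scheme \<Rightarrow> 'a \<Rightarrow> 'a \<Rightarrow> bool" where
  "conjugate_in G y y' \<longleftrightarrow> (\<exists>g\<in>carrier G. y' = inv\<^bsub>G\<^esub> g \<otimes>\<^bsub>G\<^esub> y \<otimes>\<^bsub>G\<^esub> g)"

definition conj_class :: "('a, 'b) monoid_scheme \<Rightarrow> 'a \<Rightarrow> 'a set" where
  "conj_class G y = {inv\<^bsub>G\<^esub> g \<otimes>\<^bsub>G\<^esub> y \<otimes>\<^bsub>G\<^esub> g | g. g \<in> carrier G}"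

definition central :: "('a, 'b) monoid_scheme \<Rightarrow> 'a \<Rightarrow> bool" where
  "central G x \<longleftrightarrow> (\<forall>g\<in>carrier G. x \<otimes>\<^bsub>G\<^esub> g = g \<otimes>\<^bsub>G\<^esub> x)"

definition cls_p :: "('a, 'b) monoid_scheme \<Rightarrow> 'a set \<Rightarrow> nat" where
  "cls_p G C = (LEAST p. p \<ge> 1 \<and> (\<forall>y\<in>C. central G (y [^]\<^bsub>G\<^esub> p)))"

definition ample :: "('a, 'b) monoid_scheme \<Rightarrow> 'a set \<Rightarrow> 'a set \<Rightarrow> bool" where
  "ample G Y Y' \<longleftrightarrow> (\<forall>y\<in>Y. \<forall>y'\<in>Y. conjugate_in G y y' \<longrightarrow>
      (\<exists>g\<in>generate G Y'. y' = inv\<^bsub>G\<^esub> g \<otimes>\<^bsub>G\<^esub> y \<otimes>\<^bsub>G\<^esub> g))"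

definition dist_Y :: "('a, 'b) monoid_scheme \<Rightarrow> 'a set \<Rightarrow> 'a \<Rightarrow> 'a \<Rightarrow> nat" where
  "dist_Y G Y' y y' = (LEAST r. \<exists>zs. length zs = r \<and> set zs \<subseteq> Y' \<and>
      y' = inv\<^bsub>G\<^esub> (lprod G zs) \<otimes>\<^bsub>G\<^esub> y \<otimes>\<^bsub>G\<^esub> lprod G zs)"

definition d_Y :: "('a, 'b) monoid_scheme \<Rightarrow> 'a set \<Rightarrow> 'a set \<Rightarrow> nat" where
  "d_Y G Y Y' = Max {dist_Y G Y' y y' | y y'. y \<in> Y \<and> y' \<in> Y \<and> conjugate_in G y y'}"

(* Factorization semigroup S(G,Y): words x_{g_1}...x_{g_n} (lists of elements of Y)
   modulo the congruence generated by
   x_{g1} x_{g2} = x_{g2} x_{g2^{-1} g1 g2} = x_{g1 g2 g1^{-1}} x_{g1}. *)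
inductive fact_eq :: "('a, 'b) monoid_scheme \<Rightarrow> 'a set \<Rightarrow> 'a list \<Rightarrow> 'a list \<Rightarrow> bool"
  for G Y where
  fact_refl: "fact_eq G Y w w"
| fact_sym: "fact_eq G Y u w \<Longrightarrow> fact_eq G Y w u"
| fact_trans: "fact_eq G Y u v \<Longrightarrow> fact_eq G Y v w \<Longrightarrow> fact_eq G Y u w"
| fact_rel1: "g1 \<in> Y \<Longrightarrow> g2 \<in> Y \<Longrightarrow>
     fact_eq G Y (u @ [g1, g2] @ v) (u @ [g2, inv\<^bsub>G\<^esub> g2 \<otimes>\<^bsub>G\<^esub> g1 \<otimes>\<^bsub>G\<^esub> g2] @ v)"
| fact_rel2: "g1 \<in> Y \<Longrightarrow> g2 \<in> Y \<Longrightarrow>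
     fact_eq G Y (u @ [g1, g2] @ v) (u @ [g1 \<otimes>\<^bsub>G\<^esub> g2 \<otimes>\<^bsub>G\<^esub> inv\<^bsub>G\<^esub> g1, g1] @ v)"

definition tau :: "'a set \<Rightarrow> 'a list \<Rightarrow> nat" where
  "tau C s = length (filter (\<lambda>g. g \<in> C) s)"

end

theory Submission
  imports Defs
begin


locale qg = group G for G (structure) +
  fixes Y
  assumes Ysub: "Y \<subseteq> carrier G"
  and Yconj: "\<And>y g. y \<in> Y \<Longrightarrow> g \<in> carrier G \<Longrightarrow> inv g \<otimes> y \<otimes> g \<in> Y"
begin

abbreviation FE where "FE \<equiv> fact_eq G Y"
abbreviation cj where "cj g x \<equiv> inv g \<otimes> x \<otimes> g"

lemma mcan1[simp]: "g \<in> carrier G \<Longrightarrow> x \<in> carrier G \<Longrightarrow> g \<otimes> (inv g \<otimes> x) = x"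
  by (simp add: m_assoc[symmetric])
lemma mcan2[simp]: "g \<in> carrier G \<Longrightarrow> x \<in> carrier G \<Longrightarrow> inv g \<otimes> (g \<otimes> x) = x"
  by (simp add: m_assoc[symmetric])

lemma Yc: "y \<in> Y \<Longrightarrow> y \<in> carrier G" using Ysub by auto

lemma Yconj': "y \<in> Y \<Longrightarrow> g \<in> carrier G \<Longrightarrow> g \<otimes> y \<otimes> inv g \<in> Y"
  using Yconj[of y "inv g"] by simp

lemma fe_cong: "FE u w \<Longrightarrow> FE (a @ u @ b) (a @ w @ b)"
proof (induction rule: fact_eq.induct)
  case (fact_refl w) then show ?case by (rule fact_eq.fact_refl)
next
  case (fact_sym u w) then show ?case by (metis fact_eq.fact_sym)
next
  case (fact_trans u v w) then show ?case by (metis fact_eq.fact_trans)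
next
  case (fact_rel1 g1 g2 u v)
  then show ?case using fact_eq.fact_rel1[of g1 Y g2 G "a @ u" "v @ b"] by simp
next
  case (fact_rel2 g1 g2 u v)
  then show ?case using fact_eq.fact_rel2[of g1 Y g2 G "a @ u" "v @ b"] by simp
qed

lemma fe_refl: "FE u u" by (rule fact_eq.fact_refl)
lemma fe_sym: "FE u w \<Longrightarrow> FE w u" by (rule fact_eq.fact_sym)
lemma fe_trans[trans]: "FE u v \<Longrightarrow> FE v w \<Longrightarrow> FE u w" by (rule fact_eq.fact_trans)

lemma fe_app: "FE u w \<Longrightarrow> FE (u @ b) (w @ b)"
  using fe_cong[of u w "[]" b] by simp
lemma fe_pre: "FE u w \<Longrightarrow> FE (a @ u) (a @ w)"
  using fe_cong[of u w a "[]"] by simp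
lemma fe_cons: "FE u w \<Longrightarrow> FE (x # u) (x # w)"
  using fe_pre[of u w "[x]"] by simp

lemma swapR: "g1 \<in> Y \<Longrightarrow> g2 \<in> Y \<Longrightarrow> FE (g1 # g2 # b) (g2 # cj g2 g1 # b)"
  using fact_eq.fact_rel1[of g1 Y g2 G "[]" b] by simp
lemma swapL: "g1 \<in> Y \<Longrightarrow> g2 \<in> Y \<Longrightarrow> FE (g1 # g2 # b) ((g1 \<otimes> g2 \<otimes> inv g1) # g1 # b)"
  using fact_eq.fact_rel2[of g1 Y g2 G "[]" b] by simp

lemma fe_setY: "FE u w \<Longrightarrow> (set u \<subseteq> Y \<longleftrightarrow> set w \<subseteq> Y)"
proof (induction rule: fact_eq.induct)
  case (fact_rel1 g1 g2 u v)
  then show ?case using Yconj[of g1 g2] Yc by auto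
next
  case (fact_rel2 g1 g2 u v)
  then show ?case using Yconj'[of g2 g1] Yc by auto
qed auto

lemma lprod_Cons[simp]: "lprod G (x # xs) = x \<otimes> lprod G xs"
  by (simp add: lprod_def)
lemma lprod_Nil[simp]: "lprod G [] = \<one>"
  by (simp add: lprod_def)
lemma lprod_closed[simp]: "set xs \<subseteq> carrier G \<Longrightarrow> lprod G xs \<in> carrier G"
  by (induction xs) auto
lemma lprod_append: "set xs \<subseteq> carrier G \<Longrightarrow> set ys \<subseteq> carrier G \<Longrightarrow>
   lprod G (xs @ ys) = lprod G xs \<otimes> lprod G ys"
  by (induction xs) (auto simp: m_assoc)
lemma lprod_rep: "z \<in> carrier G \<Longrightarrow> lprod G (replicate q z) = z [^] q"
  by (induction q) (auto simp add: nat_pow_Suc2[symmetric])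

lemma cj_cj: "g \<in> carrier G \<Longrightarrow> h \<in> carrier G \<Longrightarrow> x \<in> carrier G \<Longrightarrow>
   cj h (cj g x) = cj (g \<otimes> h) x"
  by (simp add: inv_mult_group m_assoc)

lemma cj_one[simp]: "x \<in> carrier G \<Longrightarrow> cj \<one> x = x" by simp

lemma YsubL: "set F \<subseteq> Y \<Longrightarrow> set F \<subseteq> carrier G" using Ysub by auto

lemma moveR: "h \<in> Y \<Longrightarrow> set F \<subseteq> Y \<Longrightarrow> FE (h # F) (F @ [cj (lprod G F) h])"
proof (induction F arbitrary: h)
  case Nil then show ?case by (simp add: Yc fe_refl)
next
  case (Cons f F)
  have f: "f \<in> Y" and F: "set F \<subseteq> Y" using Cons by auto
  have "FE (h # f # F) (f # cj f h # F)" using swapR Cons f by auto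
  also have "FE (f # cj f h # F) (f # (F @ [cj (lprod G F) (cj f h)]))"
    using Cons.IH[of "cj f h"] F Yconj[of h f] Cons.prems Yc f by (auto intro: fe_cons)
  finally show ?case using cj_cj[of f "lprod G F" h] f F Yc YsubL[OF F] Cons.prems by simp
qed

lemma moveL: "h \<in> Y \<Longrightarrow> set F \<subseteq> Y \<Longrightarrow>
   FE (F @ [h]) ((lprod G F \<otimes> h \<otimes> inv (lprod G F)) # F)"
proof (induction F arbitrary: h)
  case Nil then show ?case by (simp add: Yc fe_refl)
next
  case (Cons f F)
  have f: "f \<in> Y" and F: "set F \<subseteq> Y" using Cons by auto
  let ?P = "lprod G F"
  have P: "?P \<in> carrier G" using YsubL[OF F] by simp
  have hY: "?P \<otimes> h \<otimes> inv ?P \<in> Y" using Yconj'[OF Cons.prems(1) P] .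
  have "FE (f # F @ [h]) (f # (?P \<otimes> h \<otimes> inv ?P) # F)"
    using Cons.IH[OF Cons.prems(1) F] by (auto intro: fe_cons)
  also have "FE (f # (?P \<otimes> h \<otimes> inv ?P) # F) ((f \<otimes> (?P \<otimes> h \<otimes> inv ?P) \<otimes> inv f) # f # F)"
    using swapL f hY by auto
  finally show ?case using f P Yc Cons.prems by (simp add: m_assoc inv_mult_group)
qed

lemma moveWR: "h \<in> Y \<Longrightarrow> set F \<subseteq> Y \<Longrightarrow> FE (F @ [h]) (h # map (cj h) F)"
proof (induction F)
  case Nil then show ?case by (simp add: fe_refl)
next
  case (Cons f F)
  then have f: "f \<in> Y" and F: "set F \<subseteq> Y" by auto
  have "FE (f # F @ [h]) (f # h # map (cj h) F)" using Cons F by (auto intro: fe_cons)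
  also have "FE (f # h # map (cj h) F) (h # cj h f # map (cj h) F)" using swapR f Cons.prems by auto
  finally show ?case by simp
qed

end

context qg
begin

lemma cj_closed[simp]: "g \<in> carrier G \<Longrightarrow> x \<in> carrier G \<Longrightarrow> cj g x \<in> carrier G" by simp

lemma fe_tau:
  assumes C: "\<And>x g. x \<in> carrier G \<Longrightarrow> g \<in> carrier G \<Longrightarrow> cj g x \<in> C \<longleftrightarrow> x \<in> C"
  shows "FE u w \<Longrightarrow> tau C u = tau C w"
proof (induction rule: fact_eq.induct)
  case (fact_rel1 g1 g2 u v)
  then show ?case using C[of g1 g2] Yc by (auto simp: tau_def)
next
  case (fact_rel2 g1 g2 u v)
  then show ?case using C[of g2 "inv g1"] Yc by (auto simp: tau_def)
qed auto

lemma conj_class_cj: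
  assumes "c \<in> carrier G" "x \<in> carrier G" "g \<in> carrier G"
  shows "cj g x \<in> conj_class G c \<longleftrightarrow> x \<in> conj_class G c"
proof
  assume "cj g x \<in> conj_class G c"
  then obtain h where h: "h \<in> carrier G" "cj g x = cj h c" by (auto simp: conj_class_def)
  have "x = cj (h \<otimes> inv g) c"
  proof -
    have "x = cj (inv g) (cj g x)" using assms by (simp add: m_assoc)
    also have "\<dots> = cj (inv g) (cj h c)" using h by simp
    also have "\<dots> = cj (h \<otimes> inv g) c" using cj_cj[of h "inv g" c] h assms by simp
    finally show ?thesis .
  qed
  then show "x \<in> conj_class G c" using h assms by (auto simp: conj_class_def)
next
  assume "x \<in> conj_class G c"
  then obtain h where h: "h \<in> carrier G" "x = cj h c" by (auto simp: conj_class_def)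
  then have "cj g x = cj (h \<otimes> g) c" using cj_cj[of h g c] assms by simp
  then show "cj g x \<in> conj_class G c" using h assms by (auto simp: conj_class_def)
qed

lemma fe_tau_cls: "c \<in> carrier G \<Longrightarrow> FE u w \<Longrightarrow> tau (conj_class G c) u = tau (conj_class G c) w"
  by (rule fe_tau) (simp add: conj_class_cj)

lemma gen_sub: "A \<subseteq> carrier G \<Longrightarrow> B \<subseteq> generate G A \<Longrightarrow> generate G B \<subseteq> generate G A"
  by (simp add: generate_is_subgroup generate_subgroup_incl)

lemma gen_swap:
  assumes "A \<subseteq> carrier G" "g1 \<in> carrier G" "g2 \<in> carrier G"
  shows "generate G (A \<union> {g1, g2}) = generate G (A \<union> {g2, cj g2 g1})"
proof
  show "generate G (A \<union> {g1, g2}) \<subseteq> generate G (A \<union> {g2, cj g2 g1})"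
  proof (rule gen_sub)
    show "A \<union> {g2, cj g2 g1} \<subseteq> carrier G" using assms by auto
    have i1: "g2 \<in> generate G (A \<union> {g2, cj g2 g1})" by (auto intro: generate.incl)
    have i2: "cj g2 g1 \<in> generate G (A \<union> {g2, cj g2 g1})" by (auto intro: generate.incl)
    have i3: "inv g2 \<in> generate G (A \<union> {g2, cj g2 g1})" by (auto intro: generate.inv)
    have "g2 \<otimes> cj g2 g1 \<otimes> inv g2 \<in> generate G (A \<union> {g2, cj g2 g1})"
      using i1 i2 i3 by (auto intro: generate.eng)
    moreover have "g2 \<otimes> cj g2 g1 \<otimes> inv g2 = g1" using assms by (simp add: m_assoc)
    ultimately show "A \<union> {g1, g2} \<subseteq> generate G (A \<union> {g2, cj g2 g1})"
      using i1 by (auto intro: generate.incl)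
  qed
next
  show "generate G (A \<union> {g2, cj g2 g1}) \<subseteq> generate G (A \<union> {g1, g2})"
  proof (rule gen_sub)
    show "A \<union> {g1, g2} \<subseteq> carrier G" using assms by auto
    have a: "inv g2 \<in> generate G (A \<union> {g1, g2})" by (rule generate.inv) auto
    have b: "g1 \<in> generate G (A \<union> {g1, g2})" by (rule generate.incl) auto
    have c: "g2 \<in> generate G (A \<union> {g1, g2})" by (rule generate.incl) auto
    have "inv g2 \<otimes> g1 \<otimes> g2 \<in> generate G (A \<union> {g1, g2})"
      using generate.eng[OF generate.eng[OF a b] c] .
    moreover have "A \<subseteq> generate G (A \<union> {g1, g2})" "g2 \<in> generate G (A \<union> {g1, g2})"
      by (auto intro: generate.incl)
    ultimately show "A \<union> {g2, cj g2 g1} \<subseteq> generate G (A \<union> {g1, g2})"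
      by blast
  qed
qed

lemma fe_gen: "FE u w \<Longrightarrow> set u \<subseteq> Y \<Longrightarrow> generate G (set u) = generate G (set w)"
proof (induction rule: fact_eq.induct)
  case (fact_sym u w) then show ?case using fe_setY by metis
next
  case (fact_trans u v w) then show ?case using fe_setY by metis
next
  case (fact_rel1 g1 g2 u v)
  have "set (u @ [g1, g2] @ v) = (set u \<union> set v) \<union> {g1, g2}" by auto
  moreover have "set (u @ [g2, cj g2 g1] @ v) = (set u \<union> set v) \<union> {g2, cj g2 g1}" by auto
  ultimately show ?case using gen_swap[of "set u \<union> set v" g1 g2] fact_rel1 Yc by auto
next
  case (fact_rel2 g1 g2 u v)
  have e: "g1 \<otimes> g2 \<otimes> inv g1 \<in> carrier G" using fact_rel2 Yc by auto
  have "set (u @ [g1, g2] @ v) = (set u \<union> set v) \<union> {g2, g1}" by auto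
  moreover have "set (u @ [g1 \<otimes> g2 \<otimes> inv g1, g1] @ v) = (set u \<union> set v) \<union> {g1 \<otimes> g2 \<otimes> inv g1, g1}" by auto
  moreover have "cj (g1 \<otimes> g2 \<otimes> inv g1) g1 = g2 \<otimes> g1 \<otimes> inv g2 \<or> True" by simp
  moreover have "generate G ((set u \<union> set v) \<union> {g1 \<otimes> g2 \<otimes> inv g1, g1})
        = generate G ((set u \<union> set v) \<union> {g1, cj g1 (g1 \<otimes> g2 \<otimes> inv g1)})"
    using gen_swap[of "set u \<union> set v" "g1 \<otimes> g2 \<otimes> inv g1" g1] fact_rel2 Yc e by auto
  moreover have "cj g1 (g1 \<otimes> g2 \<otimes> inv g1) = g2" using fact_rel2 Yc by (simp add: m_assoc)
  ultimately show ?case by (simp add: insert_commute)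
qed simp

lemma centralD: "central G c \<Longrightarrow> g \<in> carrier G \<Longrightarrow> c \<otimes> g = g \<otimes> c"
  by (simp add: central_def)

lemma central_cj: "central G c \<Longrightarrow> c \<in> carrier G \<Longrightarrow> g \<in> carrier G \<Longrightarrow> cj g c = c"
proof -
  assume a: "central G c" "c \<in> carrier G" "g \<in> carrier G"
  then have "c \<otimes> g = g \<otimes> c" by (simp add: central_def)
  then show ?thesis using a by (simp add: m_assoc)
qed

lemma central_cj2: "central G c \<Longrightarrow> c \<in> carrier G \<Longrightarrow> g \<in> carrier G \<Longrightarrow> g \<otimes> c \<otimes> inv g = c"
  by (simp add: central_def m_assoc)

lemma central_mult: "central G a \<Longrightarrow> central G b \<Longrightarrow> a \<in> carrier G \<Longrightarrow> b \<in> carrier G \<Longrightarrow> central G (a \<otimes> b)"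
  unfolding central_def by (metis m_assoc)

lemma central_one: "central G \<one>" by (simp add: central_def)

lemma central_pow: "central G a \<Longrightarrow> a \<in> carrier G \<Longrightarrow> central G (a [^] (n::nat))"
  by (induction n) (auto simp: central_one central_mult)

lemma cj_pow: "g \<in> carrier G \<Longrightarrow> z \<in> carrier G \<Longrightarrow> (cj g z) [^] (q::nat) = cj g (z [^] q)"
  by (induction q) (auto simp: m_assoc)

lemma comm_central: "central G (lprod G F) \<Longrightarrow> set F \<subseteq> Y \<Longrightarrow> set w \<subseteq> Y \<Longrightarrow> FE (F @ w) (w @ F)"
proof (induction w)
  case Nil then show ?case by (simp add: fe_refl)
next
  case (Cons h w)
  have h: "h \<in> Y" using Cons by auto
  have P: "lprod G F \<in> carrier G" using YsubL[OF Cons.prems(2)] by simp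
  have "lprod G F \<otimes> h = h \<otimes> lprod G F" using Cons.prems(1) h Yc by (simp add: central_def)
  then have "lprod G F \<otimes> h \<otimes> inv (lprod G F) = h" using P h Yc by (simp add: m_assoc)
  then have "FE (F @ [h]) (h # F)" using moveL[OF h Cons.prems(2)] by simp
  then have "FE (F @ [h] @ w) (h # F @ w)" using fe_app by fastforce
  also have "FE (h # F @ w) (h # w @ F)" using Cons by (auto intro: fe_cons)
  finally show ?case by simp
qed

lemma block_commute: "z \<in> Y \<Longrightarrow> central G (z [^] q) \<Longrightarrow> set w \<subseteq> Y \<Longrightarrow>
  FE (replicate q z @ w) (w @ replicate q z)"
proof -
  assume a: "z \<in> Y" "central G (z [^] q)" "set w \<subseteq> Y"
  have "set (replicate q z) \<subseteq> Y" using a by auto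
  moreover have "central G (lprod G (replicate q z))" using lprod_rep[of z q] Yc a by simp
  ultimately show ?thesis using comm_central a by blast
qed

lemma block_cj_letter:
  assumes z: "z \<in> Y" and c: "central G (z [^] q)" and w: "set w \<subseteq> Y" and h: "h \<in> set w"
  shows "FE (replicate q z @ w) (replicate q (cj h z) @ w)"
proof -
  obtain w1 w2 where ws: "w = w1 @ h # w2" using h split_list by metis
  have hY: "h \<in> Y" and w1: "set w1 \<subseteq> Y" and w2: "set w2 \<subseteq> Y" using w ws h by auto
  have zc: "cj h z \<in> Y" using Yconj z hY Yc by auto
  have c2: "central G ((cj h z) [^] q)"
    using cj_pow[of h z q] central_cj[OF c] hY z Yc c by simp
  have "FE (replicate q z @ w1 @ h # w2) (w1 @ replicate q z @ h # w2)"
    using fe_app[OF block_commute[OF z c w1], of "h # w2"] by simp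
  also have "FE (w1 @ replicate q z @ h # w2) (w1 @ h # map (cj h) (replicate q z) @ w2)"
  proof -
    have "set (replicate q z) \<subseteq> Y" using z by auto
    then show ?thesis using fe_cong[OF moveWR[OF hY, of "replicate q z"], of w1 w2] by simp
  qed
  also have "map (cj h) (replicate q z) = replicate q (cj h z)" by simp
  also have "FE (w1 @ h # replicate q (cj h z) @ w2) (replicate q (cj h z) @ w1 @ h # w2)"
  proof -
    have "FE ((w1 @ [h]) @ replicate q (cj h z)) (replicate q (cj h z) @ (w1 @ [h]))"
      using fe_sym[OF block_commute[OF zc c2, of "w1 @ [h]"]] w1 hY by simp
    then show ?thesis using fe_app by fastforce
  qed
  finally show ?thesis using ws by simp
qed

lemma block_cj_gen:
  assumes w: "set w \<subseteq> Y" and g: "g \<in> generate G (set w)"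
  shows "\<forall>z\<in>Y. central G (z [^] q) \<longrightarrow> FE (replicate q z @ w) (replicate q (cj g z) @ w)"
  using g
proof (induction rule: generate.induct)
  case one then show ?case using Yc by (simp add: fe_refl)
next
  case (incl h) then show ?case using block_cj_letter w by blast
next
  case (inv h)
  show ?case
  proof (intro ballI impI)
    fix z assume z: "z \<in> Y" and c: "central G (z [^] q)"
    have hY: "h \<in> Y" using inv w by auto
    let ?z0 = "h \<otimes> z \<otimes> inv h"
    have z0: "?z0 \<in> Y" using Yconj' z hY Yc by auto
    have c0: "central G (?z0 [^] q)"
      using cj_pow[of "inv h" z q] central_cj2[OF c] hY z Yc c by simp
    have "FE (replicate q ?z0 @ w) (replicate q (cj h ?z0) @ w)"
      using block_cj_letter[OF z0 c0 w inv] .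
    moreover have "cj h ?z0 = z" using hY z Yc by (simp add: m_assoc)
    ultimately show "FE (replicate q z @ w) (replicate q (cj (inv h) z) @ w)"
      using hY Yc by (auto intro: fe_sym)
  qed
next
  case (eng h1 h2)
  have g1: "h1 \<in> carrier G" "h2 \<in> carrier G"
    using eng.hyps generate_in_carrier w YsubL by blast+
  show ?case
  proof (intro ballI impI)
    fix z assume z: "z \<in> Y" and c: "central G (z [^] q)"
    have z1: "cj h1 z \<in> Y" using Yconj z g1 by auto
    have c1: "central G ((cj h1 z) [^] q)" using cj_pow[of h1 z q] central_cj[OF c] g1 z Yc c by simp
    have "FE (replicate q z @ w) (replicate q (cj h1 z) @ w)" using eng.IH(1) z c by auto
    also have "FE (replicate q (cj h1 z) @ w) (replicate q (cj h2 (cj h1 z)) @ w)"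
      using eng.IH(2) z1 c1 by auto
    finally show "FE (replicate q z @ w) (replicate q (cj (h1 \<otimes> h2) z) @ w)"
      using cj_cj[of h1 h2 z] g1 z Yc by simp
  qed
qed

end


lemma tau_append[simp]: "tau C (u @ v) = tau C u + tau C v"
  by (simp add: tau_def)
lemma tau_Nil[simp]: "tau C [] = 0" by (simp add: tau_def)
lemma tau_Cons[simp]: "tau C (x # v) = (if x \<in> C then Suc (tau C v) else tau C v)"
  by (simp add: tau_def)
lemma tau_rep[simp]: "tau C (replicate q z) = (if z \<in> C then q else 0)"
  by (induction q) auto
lemma tau_zero: "(\<forall>x\<in>set w. x \<notin> C) \<Longrightarrow> tau C w = 0"
  by (simp add: tau_def filter_empty_conv)
lemma tau_zero_iff: "tau C w = 0 \<longleftrightarrow> (\<forall>x\<in>set w. x \<notin> C)"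
  by (simp add: tau_def filter_empty_conv)
lemma tau_all: "(\<forall>x\<in>set w. x \<in> C) \<Longrightarrow> tau C w = length w"
  by (simp add: tau_def)

lemma count_filter: "b \<in> C \<Longrightarrow> count_list (filter (\<lambda>x. x \<in> C) w) b = count_list w b"
  by (induction w) auto

lemma tau_sum: "finite C \<Longrightarrow> tau C w = (\<Sum>b\<in>C. count_list w b)"
proof -
  assume f: "finite C"
  have "set (filter (\<lambda>x. x \<in> C) w) \<subseteq> C" by auto
  then have "length (filter (\<lambda>x. x \<in> C) w) = sum (count_list (filter (\<lambda>x. x \<in> C) w)) C"
    using sum_count_set[of "filter (\<lambda>x. x \<in> C) w" C] f by auto
  then have "tau C w = sum (count_list (filter (\<lambda>x. x \<in> C) w)) C"
    by (simp add: tau_def)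
  also have "\<dots> = (\<Sum>b\<in>C. count_list w b)" by (rule sum.cong) (auto simp: count_filter)
  finally show ?thesis .
qed

lemma pigeon:
  assumes "finite C" "tau C w > card C * q"
  shows "\<exists>b\<in>C. count_list w b > q"
proof (rule ccontr)
  assume "\<not> ?thesis"
  then have "\<forall>b\<in>C. count_list w b \<le> q" by auto
  then have "(\<Sum>b\<in>C. count_list w b) \<le> card C * q"
    using sum_bounded_above[of C "count_list w" q] by (simp add: mult.commute)
  then show False using assms tau_sum by fastforce
qed

lemma filter_eq_rep: "filter (\<lambda>x. x \<in> {b}) w = replicate (count_list w b) b"
  by (induction w) auto

context qg
begin

lemma cj_lprod_notin:
  assumes D: "\<And>x h. x \<in> Y \<Longrightarrow> h \<in> D \<Longrightarrow> x \<notin> D \<Longrightarrow> cj h x \<notin> D" and DY: "D \<subseteq> Y"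
  shows "set F \<subseteq> D \<Longrightarrow> x \<in> Y \<Longrightarrow> x \<notin> D \<Longrightarrow> cj (lprod G F) x \<in> Y \<and> cj (lprod G F) x \<notin> D"
proof (induction F arbitrary: x)
  case Nil then show ?case using Yc by simp
next
  case (Cons f F)
  have f: "f \<in> Y" "f \<in> D" using Cons DY by auto
  have F: "set F \<subseteq> Y" using Cons DY by auto
  have "cj f x \<in> Y" "cj f x \<notin> D" using D[of x f] f Cons Yconj Yc by auto
  then have "cj (lprod G F) (cj f x) \<in> Y \<and> cj (lprod G F) (cj f x) \<notin> D" using Cons by auto
  then show ?case using cj_cj[of f "lprod G F" x] f F YsubL Cons.prems Yc by simp
qed

lemma gather:
  assumes D: "\<And>x h. x \<in> Y \<Longrightarrow> h \<in> D \<Longrightarrow> x \<notin> D \<Longrightarrow> cj h x \<notin> D" and DY: "D \<subseteq> Y"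
  shows "set w \<subseteq> Y \<Longrightarrow> \<exists>w'. FE w (filter (\<lambda>x. x \<in> D) w @ w') \<and> set w' \<subseteq> Y \<and> (\<forall>x\<in>set w'. x \<notin> D)"
proof (induction w)
  case Nil then show ?case by (auto intro: fe_refl)
next
  case (Cons h t)
  then obtain t' where t': "FE t (filter (\<lambda>x. x \<in> D) t @ t')" "set t' \<subseteq> Y" "\<forall>x\<in>set t'. x \<notin> D"
    by auto
  have h: "h \<in> Y" using Cons by auto
  show ?case
  proof (cases "h \<in> D")
    case True
    then show ?thesis using t' fe_cons by fastforce
  next
    case False
    let ?F = "filter (\<lambda>x. x \<in> D) t"
    have FD: "set ?F \<subseteq> D" by auto
    then have FY: "set ?F \<subseteq> Y" using DY by auto
    have "FE (h # t) (h # ?F @ t')" using t' fe_cons by blast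
    also have "FE (h # ?F @ t') ((?F @ [cj (lprod G ?F) h]) @ t')"
      using fe_app[OF moveR[OF h FY], of t'] by simp
    finally have "FE (h # t) (?F @ (cj (lprod G ?F) h # t'))" by simp
    then show ?thesis using False cj_lprod_notin[OF D DY FD h False] t'
      by (intro exI[of _ "cj (lprod G ?F) h # t'"]) auto
  qed
qed

lemma gather1:
  assumes b: "b \<in> Y" and w: "set w \<subseteq> Y"
  shows "\<exists>w'. FE w (replicate (count_list w b) b @ w') \<and> set w' \<subseteq> Y \<and> b \<notin> set w'"
proof -
  have D: "\<And>x h. x \<in> Y \<Longrightarrow> h \<in> {b} \<Longrightarrow> x \<notin> {b} \<Longrightarrow> cj h x \<notin> {b}"
  proof -
    fix x h assume "x \<in> Y" "h \<in> {b}" "x \<notin> {b}"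
    then show "cj h x \<notin> {b}" using b Yc by (auto simp: inv_solve_left' m_assoc)
  qed
  show ?thesis using gather[OF D _ w] b filter_eq_rep[of b w] by auto
qed

lemma central_from_Y:
  assumes gen: "generate G Y = carrier G" and a: "a \<in> carrier G"
    and comm: "\<And>x. x \<in> Y \<Longrightarrow> a \<otimes> x = x \<otimes> a"
  shows "central G a"
proof -
  have "g \<in> generate G Y \<Longrightarrow> a \<otimes> g = g \<otimes> a" for g
  proof (induction rule: generate.induct)
    case one then show ?case using a by simp
  next
    case (incl h) then show ?case using comm by simp
  next
    case (inv h)
    have h: "h \<in> carrier G" using inv Yc by auto
    have "inv h \<otimes> (a \<otimes> h) \<otimes> inv h = inv h \<otimes> (h \<otimes> a) \<otimes> inv h" using comm inv by simp
    then show ?case using h a by (simp add: m_assoc)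
  next
    case (eng h1 h2)
    have "h1 \<in> carrier G" "h2 \<in> carrier G" using eng.hyps gen by auto
    then show ?case using eng.IH a by (metis m_assoc)
  qed
  then show ?thesis using gen by (simp add: central_def)
qed

lemma exists_q:
  assumes fin: "finite Y" and gen: "generate G Y = carrier G" and y: "y \<in> carrier G"
  shows "\<exists>q::nat\<ge>1. central G (y [^] q)"
proof -
  define f where "f = (\<lambda>k::nat. restrict (\<lambda>x. cj (y [^] k) x) Y)"
  have "f ` UNIV \<subseteq> (\<Pi>\<^sub>E x\<in>Y. Y)" using Yconj y by (auto simp: f_def)
  moreover have "finite (\<Pi>\<^sub>E x\<in>Y. Y)" using fin by (simp add: finite_PiE)
  ultimately have "finite (f ` UNIV)" by (rule finite_subset)
  then have "\<not> inj f" using finite_imageD infinite_UNIV_nat by blast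
  then obtain k1 k2 where kk: "k1 \<noteq> k2" "f k1 = f k2" unfolding inj_def by blast
  obtain a b where ab: "a < b" "f a = f b" using kk by (metis linorder_neq_iff)
  define j where "j = b - a"
  have j: "j \<ge> 1" "b = a + j" using ab by (auto simp: j_def)
  have yc: "y [^] a \<in> carrier G" "y [^] j \<in> carrier G" using y by auto
  have comm: "y [^] j \<otimes> x = x \<otimes> y [^] j" if x: "x \<in> Y" for x
  proof -
    let ?x0 = "y [^] a \<otimes> x \<otimes> inv (y [^] a)"
    have x0: "?x0 \<in> Y" using Yconj' x yc by auto
    have "cj (y [^] a) ?x0 = cj (y [^] b) ?x0" using ab x0 by (metis f_def restrict_apply')
    moreover have "cj (y [^] a) ?x0 = x" using x Yc yc by (simp add: m_assoc)
    moreover have "y [^] b = y [^] a \<otimes> y [^] j" using j y by (simp add: nat_pow_mult)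
    ultimately have "x = cj (y [^] j) (cj (y [^] a) ?x0)"
      using cj_cj[of "y [^] a" "y [^] j" ?x0] yc x0 Yc by simp
    then have "x = cj (y [^] j) x" using \<open>cj (y [^] a) ?x0 = x\<close> by simp
    then have "y [^] j \<otimes> x = y [^] j \<otimes> (inv (y [^] j) \<otimes> x \<otimes> y [^] j)" by simp
    then show ?thesis using yc x Yc by (simp add: m_assoc)
  qed
  have "central G (y [^] j)" using central_from_Y[OF gen _ comm] yc by auto
  then show ?thesis using j by auto
qed

lemma exists_p:
  assumes fin: "finite Y" and gen: "generate G Y = carrier G" and C: "C \<subseteq> Y"
  shows "\<exists>p::nat\<ge>1. \<forall>y\<in>C. central G (y [^] p)"
proof -
  have "\<forall>y\<in>C. \<exists>q::nat. q \<ge> 1 \<and> central G (y [^] q)" using exists_q[OF fin gen] C Yc by blast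
  then obtain qf where qf: "\<forall>y\<in>C. qf y \<ge> (1::nat) \<and> central G (y [^] qf y)"
    using bchoice[of C "\<lambda>y q. q \<ge> (1::nat) \<and> central G (y [^] q)"] by blast
  have finC: "finite C" using C fin finite_subset by auto
  define p where "p = prod qf C"
  have "p \<ge> 1" using qf by (simp add: p_def Suc_le_eq prod_pos)
  moreover have "central G (y [^] p)" if y: "y \<in> C" for y
  proof -
    have "qf y dvd p" using y finC by (simp add: p_def dvd_prod_eqI)
    then obtain r where r: "p = qf y * r" by auto
    have yc: "y \<in> carrier G" using y C Yc by auto
    have "y [^] p = (y [^] qf y) [^] r" using r nat_pow_pow[OF yc, of "qf y" r] by simp
    then show ?thesis using central_pow qf y C Yc by auto
  qed
  ultimately show ?thesis by auto
qed

lemma cls_p_prop: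
  assumes fin: "finite Y" and gen: "generate G Y = carrier G" and C: "C \<subseteq> Y"
  shows "cls_p G C \<ge> 1 \<and> (\<forall>y\<in>C. central G (y [^] cls_p G C))"
  unfolding cls_p_def using LeastI_ex[OF exists_p[OF fin gen C]] by blast

lemma extract1:
  assumes W: "set W \<subseteq> Y" and gen: "generate G (set W) = carrier G"
    and c: "c \<in> carrier G" and CY: "conj_class G c \<subseteq> Y" and fin: "finite (conj_class G c)"
    and z: "z \<in> conj_class G c" and cen: "\<forall>y\<in>conj_class G c. central G (y [^] q)"
    and big: "tau (conj_class G c) W > card (conj_class G c) * q"
  shows "\<exists>W'. FE W (replicate q z @ W') \<and> set W' \<subseteq> Y \<and> generate G (set W') = carrier G"
proof -
  let ?C = "conj_class G c"
  obtain b where b: "b \<in> ?C" "count_list W b > q" using pigeon[OF fin big] by auto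
  have bY: "b \<in> Y" using b CY by auto
  obtain w0 where w0: "FE W (replicate (count_list W b) b @ w0)" "set w0 \<subseteq> Y"
    using gather1[OF bY W] by auto
  define W' where "W' = replicate (count_list W b - q) b @ w0"
  have eq: "replicate (count_list W b) b @ w0 = replicate q b @ W'"
    using b by (simp add: W'_def replicate_add[symmetric])
  have W'Y: "set W' \<subseteq> Y" using w0 bY by (auto simp: W'_def)
  have "generate G (set W) = generate G (set (replicate (count_list W b) b @ w0))"
    using fe_gen[OF w0(1) W] .
  also have "set (replicate (count_list W b) b @ w0) = set W'"
    using b by (auto simp: W'_def)
  finally have genW': "generate G (set W') = carrier G" using gen by simp
  obtain g1 where g1: "g1 \<in> carrier G" "b = cj g1 c" using b by (auto simp: conj_class_def)
  obtain g2 where g2: "g2 \<in> carrier G" "z = cj g2 c" using z by (auto simp: conj_class_def)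
  let ?g = "inv g1 \<otimes> g2"
  have "cj ?g b = z" using g1 g2 c cj_cj[of g1 ?g c] by (simp add: m_assoc[symmetric])
  moreover have "?g \<in> generate G (set W')" using genW' g1 g2 by simp
  ultimately have "FE (replicate q b @ W') (replicate q z @ W')"
    using block_cj_gen[OF W'Y, of ?g q] bY b cen by auto
  then show ?thesis using w0 eq W'Y genW' fe_trans by metis
qed

end


declare upt_Suc[simp del]

lemma tau_concat: "tau C (concat xs) = sum_list (map (tau C) xs)"
  by (induction xs) auto

lemma sum_list_const: "sum_list (map (\<lambda>x. c) xs) = length xs * (c::nat)"
  by (induction xs) auto

locale st = qg +
  fixes C :: "nat \<Rightarrow> 'a set" and yy :: "nat \<Rightarrow> nat \<Rightarrow> 'a" and m k :: nat
  assumes finY: "finite Y" and genY: "generate G Y = carrier G"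
  and classes: "\<forall>i\<in>{1..m}. \<exists>c\<in>carrier G. C i = conj_class G c"
  and disj: "\<forall>i\<in>{1..m}. \<forall>j\<in>{1..m}. i \<noteq> j \<longrightarrow> C i \<inter> C j = {}"
  and cover: "Y = (\<Union>i\<in>{1..m}. C i)"
  and enum: "\<forall>i\<in>{1..m}. bij_betw (yy i) {1..card (C i)} (C i)"
  and km: "k \<le> m"
  and amp: "ample G Y (\<Union>i\<in>{1..k}. C i)"
begin

abbreviation pp where "pp i \<equiv> cls_p G (C i)"
abbreviation nn where "nn i \<equiv> card (C i)"

lemma CY: "i \<in> {1..m} \<Longrightarrow> C i \<subseteq> Y" using cover by auto
lemma Cfin: "i \<in> {1..m} \<Longrightarrow> finite (C i)" by (rule finite_subset[OF CY finY])
lemma Ccls: "i \<in> {1..m} \<Longrightarrow> \<exists>c\<in>carrier G. C i = conj_class G c" using classes by auto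
lemma Ccj: "i \<in> {1..m} \<Longrightarrow> x \<in> carrier G \<Longrightarrow> g \<in> carrier G \<Longrightarrow> cj g x \<in> C i \<longleftrightarrow> x \<in> C i"
proof -
  assume a: "i \<in> {1..m}" "x \<in> carrier G" "g \<in> carrier G"
  obtain c where c: "c \<in> carrier G" "C i = conj_class G c" using Ccls[OF a(1)] by blast
  show ?thesis unfolding c(2) by (rule conj_class_cj[OF c(1) a(2,3)])
qed
lemma fe_tauC: "i \<in> {1..m} \<Longrightarrow> FE u w \<Longrightarrow> tau (C i) u = tau (C i) w"
proof -
  assume a: "i \<in> {1..m}" "FE u w"
  obtain c where c: "c \<in> carrier G" "C i = conj_class G c" using Ccls[OF a(1)] by blast
  show ?thesis unfolding c(2) by (rule fe_tau_cls[OF c(1) a(2)])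
qed
lemma pp_prop: "i \<in> {1..m} \<Longrightarrow> pp i \<ge> 1 \<and> (\<forall>y\<in>C i. central G (y [^] pp i))"
  by (rule cls_p_prop[OF finY genY CY])
lemma yy_in: "i \<in> {1..m} \<Longrightarrow> j \<in> {1..nn i} \<Longrightarrow> yy i j \<in> C i"
proof -
  assume a: "i \<in> {1..m}" "j \<in> {1..nn i}"
  have "bij_betw (yy i) {1..nn i} (C i)" using enum a(1) by blast
  then show ?thesis using a(2) bij_betwE by blast
qed
lemma yy_img: "i \<in> {1..m} \<Longrightarrow> yy i ` {1..nn i} = C i"
proof -
  assume a: "i \<in> {1..m}"
  have "bij_betw (yy i) {1..nn i} (C i)" using enum a(1) by blast
  then show ?thesis by (rule bij_betw_imp_surj_on)
qed
lemma Cne: "i \<in> {1..m} \<Longrightarrow> C i \<noteq> {}"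
proof -
  assume i: "i \<in> {1..m}"
  then obtain c where "c \<in> carrier G" "C i = conj_class G c" using Ccls by blast
  moreover have "c = cj \<one> c" using \<open>c \<in> carrier G\<close> by simp
  ultimately have "c \<in> C i" unfolding conj_class_def by blast
  then show ?thesis by auto
qed
lemma nn_pos: "i \<in> {1..m} \<Longrightarrow> nn i \<ge> 1"
  using Cne Cfin by (simp add: Suc_le_eq card_gt_0_iff)
lemma Cdisj: "i \<in> {1..m} \<Longrightarrow> j \<in> {1..m} \<Longrightarrow> x \<in> C i \<Longrightarrow> x \<in> C j \<Longrightarrow> i = j"
  using disj by blast

definition Si where "Si i = concat (map (\<lambda>j. replicate (pp i) (yy i j)) [1..<nn i + 1])"
definition SS where "SS = concat (map Si [1..<k+1])"

lemma Si_alt: "Si i = concat (map (\<lambda>z. replicate (pp i) z) (map (yy i) [1..<nn i + 1]))"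
  by (simp add: Si_def o_def)

lemma set_Si: "i \<in> {1..m} \<Longrightarrow> set (Si i) \<subseteq> C i"
  using yy_in by (auto simp: Si_def)

lemma tau_Si: "i \<in> {1..m} \<Longrightarrow> j \<in> {1..m} \<Longrightarrow> tau (C j) (Si i) = (if i = j then nn i * pp i else 0)"
proof -
  assume i: "i \<in> {1..m}" and j: "j \<in> {1..m}"
  have eq1: "map (\<lambda>jj. tau (C j) (replicate (pp i) (yy i jj))) [1..<nn i + 1]
      = map (\<lambda>jj. if i = j then pp i else 0) [1..<nn i + 1]"
  proof (rule map_cong[OF refl])
    fix jj assume "jj \<in> set [1..<nn i + 1]"
    then have "jj \<in> {1..nn i}" by auto
    then have y: "yy i jj \<in> C i" using yy_in[OF i] by blast
    show "tau (C j) (replicate (pp i) (yy i jj)) = (if i = j then pp i else 0)"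
    proof (cases "i = j")
      case True then show ?thesis using y by simp
    next
      case False
      then have "yy i jj \<notin> C j" using Cdisj[OF i j y] by blast
      then show ?thesis using False by simp
    qed
  qed
  have "tau (C j) (Si i) = sum_list (map (\<lambda>jj. tau (C j) (replicate (pp i) (yy i jj))) [1..<nn i + 1])"
    by (simp only: Si_def tau_concat map_map o_def)
  also have "\<dots> = sum_list (map (\<lambda>jj. if i = j then pp i else 0) [1..<nn i + 1])"
    by (simp only: eq1)
  finally have "tau (C j) (Si i) = sum_list (map (\<lambda>jj. if i = j then pp i else 0) [1..<nn i + 1])" .
  then show ?thesis by (simp add: sum_list_const)
qed

lemma extract_class:
  assumes i: "i \<in> {1..m}"
  shows "set zs \<subseteq> C i \<Longrightarrow> set W \<subseteq> Y \<Longrightarrow> generate G (set W) = carrier G \<Longrightarrow>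
    tau (C i) W \<ge> length zs * pp i + nn i * pp i + 1 \<Longrightarrow>
    \<exists>W'. FE W (concat (map (\<lambda>z. replicate (pp i) z) zs) @ W') \<and> set W' \<subseteq> Y \<and>
          generate G (set W') = carrier G"
proof (induction zs arbitrary: W)
  case Nil then show ?case by (auto intro: fe_refl)
next
  case (Cons z zs)
  obtain c where c: "c \<in> carrier G" "C i = conj_class G c" using Ccls[OF i] by blast
  have "\<exists>W1. FE W (replicate (pp i) z @ W1) \<and> set W1 \<subseteq> Y \<and> generate G (set W1) = carrier G"
    using extract1[OF Cons.prems(2,3) c(1), of z "pp i"] c CY[OF i] Cfin[OF i] Cons.prems(1,4) pp_prop[OF i]
    by auto
  then obtain W1 where W1: "FE W (replicate (pp i) z @ W1)" "set W1 \<subseteq> Y" "generate G (set W1) = carrier G"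
    by blast
  have "tau (C i) W = pp i + tau (C i) W1" using fe_tauC[OF i W1(1)] Cons.prems(1) by simp
  then have "tau (C i) W1 \<ge> length zs * pp i + nn i * pp i + 1" using Cons.prems(4) by simp
  then obtain W' where W': "FE W1 (concat (map (\<lambda>z. replicate (pp i) z) zs) @ W')" "set W' \<subseteq> Y"
    "generate G (set W') = carrier G" using Cons.IH[OF _ W1(2,3)] Cons.prems(1) by auto
  have "FE W (replicate (pp i) z @ concat (map (\<lambda>z. replicate (pp i) z) zs) @ W')"
    using fe_trans[OF W1(1) fe_pre[OF W'(1)]] .
  then show ?case using W' by auto
qed

lemma extract_S_list:
  "distinct is \<Longrightarrow> set is \<subseteq> {1..k} \<Longrightarrow> set W \<subseteq> Y \<Longrightarrow> generate G (set W) = carrier G \<Longrightarrow>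
    (\<forall>i\<in>set is. tau (C i) W \<ge> 2 * nn i * pp i + 1) \<Longrightarrow>
    \<exists>W'. FE W (concat (map Si is) @ W') \<and> set W' \<subseteq> Y \<and> generate G (set W') = carrier G \<and>
      (\<forall>j\<in>{1..m}. tau (C j) W' + (if j \<in> set is then nn j * pp j else 0) = tau (C j) W)"
proof (induction "is" arbitrary: W)
  case Nil then show ?case by (auto intro: fe_refl)
next
  case (Cons i "is")
  have i: "i \<in> {1..m}" using Cons.prems(2) km by auto
  have zs: "set (map (yy i) [1..<nn i + 1]) \<subseteq> C i" using yy_in[OF i] by auto
  have big: "tau (C i) W \<ge> length (map (yy i) [1..<nn i + 1]) * pp i + nn i * pp i + 1"
    using Cons.prems(5) by simp
  obtain W1 where W1: "FE W (Si i @ W1)" "set W1 \<subseteq> Y" "generate G (set W1) = carrier G"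
    using extract_class[OF i zs Cons.prems(3,4) big] unfolding Si_alt by blast
  have t1: "tau (C j) W = tau (C j) (Si i) + tau (C j) W1" if j: "j \<in> {1..m}" for j
    using fe_tauC[OF j W1(1)] by simp
  have IHp: "\<forall>j\<in>set is. tau (C j) W1 \<ge> 2 * nn j * pp j + 1"
  proof
    fix j assume j: "j \<in> set is"
    then have jm: "j \<in> {1..m}" "j \<noteq> i" using Cons.prems(1,2) km by auto
    then show "tau (C j) W1 \<ge> 2 * nn j * pp j + 1"
      using t1[OF jm(1)] tau_Si[OF i jm(1)] Cons.prems(5) j by auto
  qed
  obtain W' where W': "FE W1 (concat (map Si is) @ W')" "set W' \<subseteq> Y" "generate G (set W') = carrier G"
    "\<forall>j\<in>{1..m}. tau (C j) W' + (if j \<in> set is then nn j * pp j else 0) = tau (C j) W1"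
    using Cons.IH[OF _ _ W1(2,3) IHp] Cons.prems(1,2) by auto
  have "FE W (Si i @ concat (map Si is) @ W')" using fe_trans[OF W1(1) fe_pre[OF W'(1)]] .
  then have "FE W (concat (map Si (i # is)) @ W')" by simp
  moreover have "\<forall>j\<in>{1..m}. tau (C j) W' + (if j \<in> set (i # is) then nn j * pp j else 0) = tau (C j) W"
  proof
    fix j assume j: "j \<in> {1..m}"
    have a: "tau (C j) W' + (if j \<in> set is then nn j * pp j else 0) = tau (C j) W1"
      using W'(4) j by blast
    show "tau (C j) W' + (if j \<in> set (i # is) then nn j * pp j else 0) = tau (C j) W"
    proof (cases "j = i")
      case True
      then have "j \<notin> set is" using Cons.prems(1) by auto
      then show ?thesis using a True t1[OF j] tau_Si[OF i j] by simp
    next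
      case False
      then show ?thesis using a t1[OF j] tau_Si[OF i j] by auto
    qed
  qed
  ultimately show ?case using W' by blast
qed

lemma extract_Sd:
  "set W \<subseteq> Y \<Longrightarrow> generate G (set W) = carrier G \<Longrightarrow>
    (\<forall>i\<in>{1..k}. tau (C i) W \<ge> d * nn i * pp i + nn i * pp i + 1) \<Longrightarrow>
    \<exists>W'. FE W (concat (replicate d SS) @ W') \<and> set W' \<subseteq> Y \<and> generate G (set W') = carrier G \<and>
      (\<forall>j\<in>{1..m}. tau (C j) W' + (if j \<le> k then d * nn j * pp j else 0) = tau (C j) W)"
proof (induction d arbitrary: W)
  case 0 then show ?case by (auto intro: fe_refl)
next
  case (Suc d)
  have "\<forall>i\<in>set [1..<k+1]. tau (C i) W \<ge> 2 * nn i * pp i + 1"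
  proof
    fix i assume "i \<in> set [1..<k+1]"
    then have "tau (C i) W \<ge> Suc d * nn i * pp i + nn i * pp i + 1" using Suc.prems(3) by auto
    moreover have "Suc d * nn i * pp i \<ge> nn i * pp i" by simp
    ultimately show "tau (C i) W \<ge> 2 * nn i * pp i + 1" by linarith
  qed
  moreover have "distinct [1..<k+1]" "set [1..<k+1] \<subseteq> {1..k}" by auto
  ultimately obtain W1 where W1: "FE W (SS @ W1)" "set W1 \<subseteq> Y" "generate G (set W1) = carrier G"
    "\<forall>j\<in>{1..m}. tau (C j) W1 + (if j \<in> set [1..<k+1] then nn j * pp j else 0) = tau (C j) W"
    using extract_S_list[of "[1..<k+1]" W] Suc.prems(1,2) unfolding SS_def by blast
  have setk: "j \<in> set [1..<k+1] \<longleftrightarrow> j \<in> {1..k}" for j by auto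
  have "\<forall>i\<in>{1..k}. tau (C i) W1 \<ge> d * nn i * pp i + nn i * pp i + 1"
  proof
    fix i assume i: "i \<in> {1..k}"
    then have "i \<in> {1..m}" "i \<in> set [1..<k+1]" using km setk by auto
    moreover have "tau (C i) W1 + (if i \<in> set [1..<k+1] then nn i * pp i else 0) = tau (C i) W"
      using W1(4) calculation(1) by blast
    ultimately have "tau (C i) W1 + nn i * pp i = tau (C i) W" by simp
    moreover have "tau (C i) W \<ge> Suc d * nn i * pp i + nn i * pp i + 1" using Suc.prems(3) i by auto
    ultimately show "tau (C i) W1 \<ge> d * nn i * pp i + nn i * pp i + 1" by (simp add: algebra_simps)
  qed
  then obtain W' where W': "FE W1 (concat (replicate d SS) @ W')" "set W' \<subseteq> Y" "generate G (set W') = carrier G"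
      "\<forall>j\<in>{1..m}. tau (C j) W' + (if j \<le> k then d * nn j * pp j else 0) = tau (C j) W1"
    using Suc.IH[OF W1(2,3)] by blast
  have "FE W (SS @ concat (replicate d SS) @ W')" using fe_trans[OF W1(1) fe_pre[OF W'(1)]] .
  then have "FE W (concat (replicate (Suc d) SS) @ W')" by simp
  moreover have "\<forall>j\<in>{1..m}. tau (C j) W' + (if j \<le> k then Suc d * nn j * pp j else 0) = tau (C j) W"
  proof
    fix j assume j: "j \<in> {1..m}"
    have a: "tau (C j) W' + (if j \<le> k then d * nn j * pp j else 0) = tau (C j) W1"
      using W'(4) j by blast
    have b0: "tau (C j) W1 + (if j \<in> set [1..<k+1] then nn j * pp j else 0) = tau (C j) W"
      using W1(4) j by blast
    have "(j \<in> set [1..<k+1]) = (j \<le> k)" using j by auto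
    then have b: "tau (C j) W1 + (if j \<le> k then nn j * pp j else 0) = tau (C j) W"
      using b0 by simp
    show "tau (C j) W' + (if j \<le> k then Suc d * nn j * pp j else 0) = tau (C j) W"
      using a b by (auto simp: algebra_simps)
  qed
  ultimately show ?case using W' by blast
qed

end


context qg
begin

lemma moveWordR: "set U \<subseteq> Y \<Longrightarrow> set V \<subseteq> Y \<Longrightarrow> FE (U @ V) (V @ map (cj (lprod G V)) U)"
proof (induction U)
  case Nil then show ?case by (simp add: fe_refl)
next
  case (Cons u U)
  have u: "u \<in> Y" and U: "set U \<subseteq> Y" using Cons by auto
  have "FE (u # U @ V) (u # V @ map (cj (lprod G V)) U)" using Cons.IH[OF U Cons.prems(2)] fe_cons by blast
  also have "FE (u # V @ map (cj (lprod G V)) U) ((V @ [cj (lprod G V) u]) @ map (cj (lprod G V)) U)"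
    using fe_app[OF moveR[OF u Cons.prems(2)]] by simp
  finally show ?case by simp
qed

lemma central_inv: "central G a \<Longrightarrow> a \<in> carrier G \<Longrightarrow> central G (inv a)"
proof -
  assume a: "central G a" "a \<in> carrier G"
  have "inv a \<otimes> g = g \<otimes> inv a" if g: "g \<in> carrier G" for g
  proof -
    have "a \<otimes> g = g \<otimes> a" using a g by (simp add: central_def)
    then have "inv a \<otimes> (a \<otimes> g) \<otimes> inv a = inv a \<otimes> (g \<otimes> a) \<otimes> inv a" by simp
    then show ?thesis using a g by (simp add: m_assoc)
  qed
  then show ?thesis by (simp add: central_def)
qed

lemma lprod_concat_central:
  "\<forall>x\<in>set xs. set x \<subseteq> carrier G \<and> central G (lprod G x) \<Longrightarrow>
    central G (lprod G (concat xs))"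
proof (induction xs)
  case Nil then show ?case by (simp add: central_one)
next
  case (Cons x xs)
  have "set (concat xs) \<subseteq> carrier G" using Cons.prems by auto
  then show ?case using Cons lprod_append[of x "concat xs"] central_mult by auto
qed

end

context st
begin

abbreviation Yp where "Yp \<equiv> (\<Union>i\<in>{1..k}. C i)"

definition good where "good R \<longleftrightarrow> set R \<subseteq> Y \<and> (\<forall>i\<in>{k+1..m}. tau (C i) R = 0) \<and>
   (\<forall>j\<in>{1..k}. tau (C j) R > nn j * (pp j - 1))"

lemma Yp_Y: "Yp \<subseteq> Y"
proof (rule UN_least)
  fix i assume "i \<in> {1..k}"
  then have "i \<in> {1..m}" using km by auto
  then show "C i \<subseteq> Y" by (rule CY)
qed

lemma ample_g:
  assumes j: "j \<in> {1..m}" and b: "b \<in> C j" and z: "z \<in> C j"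
  shows "\<exists>g\<in>generate G Yp. z = cj g b"
proof -
  obtain c where c: "c \<in> carrier G" "C j = conj_class G c" using Ccls[OF j] by blast
  obtain g1 where g1: "g1 \<in> carrier G" "b = cj g1 c" using b c by (auto simp: conj_class_def)
  obtain g2 where g2: "g2 \<in> carrier G" "z = cj g2 c" using z c by (auto simp: conj_class_def)
  let ?g = "inv g1 \<otimes> g2"
  have "cj ?g b = z" using g1 g2 c cj_cj[of g1 ?g c] by (simp add: m_assoc[symmetric])
  then have "conjugate_in G b z" using g1 g2 unfolding conjugate_in_def by (metis inv_closed m_closed)
  moreover have "b \<in> Y" "z \<in> Y" using b z CY[OF j] by auto
  ultimately show ?thesis using amp unfolding ample_def by blast
qed

lemma supply_lem:
  assumes j: "j \<in> {1..k}" and z: "z \<in> C j" and X: "set X \<subseteq> Y" and XY: "Yp \<subseteq> set X"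
    and R: "good R"
  shows "\<exists>R2. FE (X @ R) (replicate (pp j) z @ X @ R2) \<and> set R2 \<subseteq> Y \<and>
     (\<forall>i\<in>{1..m}. tau (C i) R2 + (if i = j then pp j else 0) = tau (C i) R)"
proof -
  have jm: "j \<in> {1..m}" using j km by auto
  have RY: "set R \<subseteq> Y" using R by (simp add: good_def)
  have "tau (C j) R > nn j * (pp j - 1)" using R j by (simp add: good_def)
  then obtain b where b: "b \<in> C j" "count_list R b > pp j - 1" using pigeon[OF Cfin[OF jm]] by blast
  have bY: "b \<in> Y" using b CY[OF jm] by auto
  have p1: "pp j \<ge> 1" using pp_prop[OF jm] by auto
  obtain R0 where R0: "FE R (replicate (count_list R b) b @ R0)" "set R0 \<subseteq> Y"
    using gather1[OF bY RY] by blast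
  define R1 where "R1 = replicate (count_list R b - pp j) b @ R0"
  have eq: "replicate (count_list R b) b @ R0 = replicate (pp j) b @ R1"
    using b p1 by (simp add: R1_def replicate_add[symmetric])
  have R1Y: "set R1 \<subseteq> Y" using R0 bY by (auto simp: R1_def)
  have cb: "central G (b [^] pp j)" using pp_prop[OF jm] b by auto
  have "FE (X @ R) (X @ replicate (pp j) b @ R1)" using fe_pre[OF R0(1)] eq by simp
  also have "FE (X @ replicate (pp j) b @ R1) (replicate (pp j) b @ X @ R1)"
    using fe_app[OF fe_sym[OF block_commute[OF bY cb X]], of R1] by simp
  also have "FE (replicate (pp j) b @ X @ R1) (replicate (pp j) z @ X @ R1)"
  proof -
    obtain g where g: "g \<in> generate G Yp" "z = cj g b" using ample_g[OF jm b(1) z] by blast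
    have "generate G Yp \<subseteq> generate G (set (X @ R1))" using XY by (intro mono_generate) auto
    then have "g \<in> generate G (set (X @ R1))" using g by auto
    then show ?thesis using block_cj_gen[of "X @ R1" g "pp j"] X R1Y bY cb g(2) by auto
  qed
  finally have fe: "FE (X @ R) (replicate (pp j) z @ X @ R1)" .
  have "\<forall>i\<in>{1..m}. tau (C i) R1 + (if i = j then pp j else 0) = tau (C i) R"
  proof
    fix i assume i: "i \<in> {1..m}"
    have "tau (C i) R = tau (C i) (replicate (pp j) b @ R1)" using fe_tauC[OF i R0(1)] eq by simp
    moreover have "b \<in> C i \<longleftrightarrow> i = j" using Cdisj[OF i jm] b by auto
    ultimately show "tau (C i) R1 + (if i = j then pp j else 0) = tau (C i) R" by auto
  qed
  then show ?thesis using fe R1Y by blast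
qed

lemma conv1:
  assumes c: "c \<in> Y" and j: "j \<in> {1..k}" and z: "z \<in> C j" and X: "set X \<subseteq> Y" and XY: "Yp \<subseteq> set X"
    and R: "good R"
  shows "\<exists>R'. good R' \<and> FE (c # X @ R) (cj z c # X @ R')"
proof -
  have jm: "j \<in> {1..m}" using j km by auto
  have zY: "z \<in> Y" using z CY[OF jm] by auto
  obtain R2 where R2: "FE (X @ R) (replicate (pp j) z @ X @ R2)" "set R2 \<subseteq> Y"
     "\<forall>i\<in>{1..m}. tau (C i) R2 + (if i = j then pp j else 0) = tau (C i) R"
    using supply_lem[OF j z X XY R] by blast
  have p1: "pp j \<ge> 1" using pp_prop[OF jm] by auto
  then have rep: "replicate (pp j) z = z # replicate (pp j - 1) z" by (cases "pp j") auto
  let ?c' = "cj z c"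
  let ?z' = "cj ?c' z"
  have c'Y: "?c' \<in> Y" using Yconj c zY Yc by auto
  have z'Y: "?z' \<in> Y" using Yconj zY c'Y Yc by auto
  let ?U = "?z' # replicate (pp j - 1) z"
  have UY: "set ?U \<subseteq> Y" using z'Y zY by auto
  have "FE (c # X @ R) (c # replicate (pp j) z @ X @ R2)" using fe_cons[OF R2(1)] .
  also have "\<dots> = c # z # replicate (pp j - 1) z @ X @ R2" using rep by simp
  also have "FE \<dots> (z # ?c' # replicate (pp j - 1) z @ X @ R2)" using swapR c zY by blast
  also have "FE \<dots> (?c' # ?z' # replicate (pp j - 1) z @ X @ R2)" using swapR zY c'Y by blast
  also have "?c' # ?z' # replicate (pp j - 1) z @ X @ R2 = ?c' # (?U @ X) @ R2" by simp
  also have "FE \<dots> (?c' # (X @ map (cj (lprod G X)) ?U) @ R2)"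
    using fe_cons[OF fe_app[OF moveWordR[OF UY X]]] .
  finally have fe: "FE (c # X @ R) (?c' # X @ (map (cj (lprod G X)) ?U @ R2))" by simp
  define R' where "R' = map (cj (lprod G X)) ?U @ R2"
  have Pc: "lprod G X \<in> carrier G" using YsubL[OF X] by simp
  have UC: "\<forall>x\<in>set ?U. x \<in> C j"
  proof -
    have "?z' \<in> C j" using Ccj[OF jm] z Yc zY c'Y by auto
    then show ?thesis using z by auto
  qed
  have mUC: "\<forall>x\<in>set (map (cj (lprod G X)) ?U). x \<in> C j"
    using UC Ccj[OF jm _ Pc] UY Yc by auto
  have mUY: "set (map (cj (lprod G X)) ?U) \<subseteq> Y" using UY Yconj Pc by auto
  have lenU: "length (map (cj (lprod G X)) ?U) = pp j" using p1 by simp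
  have "good R'"
    unfolding good_def
  proof (intro conjI ballI)
    show "set R' \<subseteq> Y" using mUY R2(2) by (simp add: R'_def)
  next
    fix i assume i: "i \<in> {k+1..m}"
    then have im: "i \<in> {1..m}" "i \<noteq> j" using j by auto
    have "tau (C i) (map (cj (lprod G X)) ?U) = 0"
      using mUC Cdisj[OF im(1) jm] im(2) by (intro tau_zero) blast
    moreover have "tau (C i) R2 + (if i = j then pp j else 0) = tau (C i) R" using R2(3) im(1) by blast
    then have "tau (C i) R2 = tau (C i) R" using im(2) by simp
    moreover
    moreover have "tau (C i) R = 0" using R i by (simp add: good_def)
    moreover have "tau (C i) R' = tau (C i) (map (cj (lprod G X)) ?U) + tau (C i) R2"
      by (simp only: R'_def tau_append)
    ultimately show "tau (C i) R' = 0" by linarith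
  next
    fix i assume i: "i \<in> {1..k}"
    then have im: "i \<in> {1..m}" using km by auto
    have e: "tau (C i) R' = tau (C i) (map (cj (lprod G X)) ?U) + tau (C i) R2"
      by (simp only: R'_def tau_append)
    show "tau (C i) R' > nn i * (pp i - 1)"
    proof (cases "i = j")
      case True
      then have "tau (C i) (map (cj (lprod G X)) ?U) = pp j" using mUC lenU tau_all by metis
      moreover have "tau (C j) R2 + (if j = j then pp j else 0) = tau (C j) R" using R2(3) jm by blast
      moreover have "tau (C j) R > nn j * (pp j - 1)" using R j unfolding good_def by blast
      ultimately show ?thesis using e True by simp
    next
      case False
      then have "tau (C i) (map (cj (lprod G X)) ?U) = 0"
        using mUC Cdisj[OF im jm] by (intro tau_zero) blast
      moreover have "tau (C i) R2 + (if i = j then pp j else 0) = tau (C i) R" using R2(3) im by blast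
      moreover have "tau (C i) R > nn i * (pp i - 1)" using R i unfolding good_def by blast
      ultimately show ?thesis using e False by simp
    qed
  qed
  then show ?thesis using fe R'_def by blast
qed

definition Psi where "Psi X g \<longleftrightarrow> (\<forall>c\<in>Y. \<forall>R. good R \<longrightarrow> (\<exists>R'. good R' \<and> FE (c # X @ R) (cj g c # X @ R')))"

lemma Psi_one: "Psi X \<one>" unfolding Psi_def using Yc by (auto intro: fe_refl)

lemma Psi_comp: "Psi X g \<Longrightarrow> Psi X h \<Longrightarrow> g \<in> carrier G \<Longrightarrow> h \<in> carrier G \<Longrightarrow> Psi X (g \<otimes> h)"
  unfolding Psi_def
proof (intro ballI allI impI)
  fix c R assume g: "\<forall>c\<in>Y. \<forall>R. good R \<longrightarrow> (\<exists>R'. good R' \<and> FE (c # X @ R) (cj g c # X @ R'))"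
    and h: "\<forall>c\<in>Y. \<forall>R. good R \<longrightarrow> (\<exists>R'. good R' \<and> FE (c # X @ R) (cj h c # X @ R'))"
    and gc: "g \<in> carrier G" and hc: "h \<in> carrier G" and c: "c \<in> Y" and R: "good R"
  obtain R1 where R1: "good R1" "FE (c # X @ R) (cj g c # X @ R1)" using g c R by blast
  have "cj g c \<in> Y" using Yconj c gc by auto
  then obtain R2 where R2: "good R2" "FE (cj g c # X @ R1) (cj h (cj g c) # X @ R2)" using h R1 by blast
  have "cj h (cj g c) = cj (g \<otimes> h) c" using cj_cj gc hc c Yc by auto
  then show "\<exists>R'. good R' \<and> FE (c # X @ R) (cj (g \<otimes> h) c # X @ R')"
    using R1 R2 fe_trans by metis
qed

lemma Psi_gen:
  assumes X: "set X \<subseteq> Y" and XY: "Yp \<subseteq> set X" and g: "g \<in> generate G Yp"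
  shows "Psi X g"
  using g
proof (induction rule: generate.induct)
  case one then show ?case by (rule Psi_one)
next
  case (incl z)
  then obtain j where j: "j \<in> {1..k}" "z \<in> C j" by auto
  show ?case unfolding Psi_def using conv1[OF _ j X XY] by blast
next
  case (inv z)
  then obtain j where j: "j \<in> {1..k}" "z \<in> C j" by auto
  have jm: "j \<in> {1..m}" using j km by auto
  have zc: "z \<in> carrier G" using j CY[OF jm] Yc by auto
  have Pz: "Psi X z" unfolding Psi_def using conv1[OF _ j X XY] by blast
  have Pn: "Psi X (z [^] n)" for n :: nat
  proof (induction n)
    case 0 then show ?case using Psi_one by simp
  next
    case (Suc n) then show ?case using Psi_comp[OF Suc Pz] zc by simp
  qed
  define p where "p = pp j"
  have p1: "p \<ge> 1" and cen: "central G (z [^] p)" using pp_prop[OF jm] j by (auto simp: p_def)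
  have pe: "z [^] p = z [^] (p - 1) \<otimes> z" using p1 zc by (cases p) auto
  have ie: "inv z = inv (z [^] p) \<otimes> z [^] (p - 1)"
  proof -
    have "inv (z [^] p) \<otimes> z [^] (p - 1) \<otimes> z = \<one>" using pe zc by (simp add: m_assoc)
    then show ?thesis using zc by (metis inv_equality m_closed nat_pow_closed inv_closed)
  qed
  have eq: "\<And>c. c \<in> carrier G \<Longrightarrow> cj (inv z) c = cj (z [^] (p - 1)) c"
  proof -
    fix c assume cc: "c \<in> carrier G"
    have ci: "central G (inv (z [^] p))" using central_inv[OF cen] zc by auto
    have "cj (inv z) c = cj (z [^] (p - 1)) (cj (inv (z [^] p)) c)"
      using ie cj_cj[of "inv (z [^] p)" "z [^] (p - 1)" c] zc cc by simp
    also have "cj (inv (z [^] p)) c = c"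
    proof -
      have "c \<otimes> inv (z [^] p) = inv (z [^] p) \<otimes> c" using ci cc by (simp add: central_def)
      then show ?thesis using cc zc by (simp add: m_assoc)
    qed
    finally show "cj (inv z) c = cj (z [^] (p - 1)) c" by simp
  qed
  show ?case using Pn[of "p - 1"] eq Yc unfolding Psi_def by simp
next
  case (eng g h)
  have "g \<in> carrier G" "h \<in> carrier G" using eng.hyps generate_in_carrier Yp_Y YsubL
    by (meson Ysub subset_trans)+
  then show ?case using Psi_comp eng.IH by blast
qed

lemma conv_list:
  assumes T: "set T \<subseteq> Y" and TY: "Yp \<subseteq> set T"
    and f: "\<forall>c\<in>set L. \<exists>g\<in>generate G Yp. f c = cj g c"
  shows "set L \<subseteq> Y \<Longrightarrow> good R \<Longrightarrow> \<exists>R'. good R' \<and> FE (L @ T @ R) (map f L @ T @ R')"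
  using f
proof (induction L arbitrary: R)
  case Nil then show ?case by (auto intro: fe_refl)
next
  case (Cons c L)
  have cY: "c \<in> Y" and LY: "set L \<subseteq> Y" using Cons by auto
  have fL: "\<forall>c\<in>set L. \<exists>g\<in>generate G Yp. f c = cj g c" using Cons.prems(3) by auto
  obtain R1 where R1: "good R1" "FE (L @ T @ R) (map f L @ T @ R1)"
    using Cons.IH[OF LY Cons.prems(2) fL] by blast
  have fY: "set (map f L) \<subseteq> Y"
  proof
    fix x assume "x \<in> set (map f L)"
    then obtain c' where c': "c' \<in> set L" "x = f c'" by auto
    then obtain g where "g \<in> generate G Yp" "f c' = cj g c'" using Cons.prems(3) by auto
    moreover have "g \<in> carrier G" using calculation generate_in_carrier Yp_Y Ysub by (meson subset_trans)
    ultimately show "x \<in> Y" using Yconj c' LY by auto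
  qed
  obtain g where g: "g \<in> generate G Yp" "f c = cj g c" using Cons.prems(3) by auto
  have X: "set (map f L @ T) \<subseteq> Y" using fY T by auto
  have XY: "Yp \<subseteq> set (map f L @ T)" using TY by auto
  obtain R' where R': "good R'" "FE (c # (map f L @ T) @ R1) (cj g c # (map f L @ T) @ R')"
    using Psi_gen[OF X XY g(1)] cY R1(1) unfolding Psi_def by blast
  have "FE (c # L @ T @ R) (c # map f L @ T @ R1)" using fe_cons[OF R1(2)] .
  also have "FE (c # map f L @ T @ R1) (f c # map f L @ T @ R')" using R'(2) g(2) by simp
  finally show ?case using R'(1) by auto
qed

end


lemma map_const_rep: "(\<forall>x\<in>set xs. f x = c) \<Longrightarrow> map f xs = replicate (length xs) c"
  by (induction xs) auto

context st
begin

lemma gather_classes: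
  "distinct is \<Longrightarrow> set is \<subseteq> {1..m} \<Longrightarrow> set w \<subseteq> Y \<Longrightarrow>
   \<exists>Ls R. FE w (concat (map Ls is) @ R) \<and> (\<forall>i\<in>set is. set (Ls i) \<subseteq> C i \<and> length (Ls i) = tau (C i) w)
     \<and> set R \<subseteq> Y \<and> (\<forall>i\<in>set is. tau (C i) R = 0) \<and> (\<forall>j\<in>{1..m}. j \<notin> set is \<longrightarrow> tau (C j) R = tau (C j) w)"
proof (induction "is" arbitrary: w)
  case Nil
  show ?case by (rule exI[of _ "\<lambda>_. []"], rule exI[of _ w]) (use Nil in \<open>auto intro: fe_refl\<close>)
next
  case (Cons i "is")
  have i: "i \<in> {1..m}" using Cons.prems by auto
  have D: "\<And>x h. x \<in> Y \<Longrightarrow> h \<in> C i \<Longrightarrow> x \<notin> C i \<Longrightarrow> cj h x \<notin> C i"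
  proof -
    fix x h assume a: "x \<in> Y" "h \<in> C i" "x \<notin> C i"
    have "h \<in> carrier G" using a(2) CY[OF i] Yc by auto
    then show "cj h x \<notin> C i" using Ccj[OF i, of x h] a Yc by simp
  qed
  obtain w1 where w1: "FE w (filter (\<lambda>x. x \<in> C i) w @ w1)" "set w1 \<subseteq> Y" "\<forall>x\<in>set w1. x \<notin> C i"
    using gather[OF D CY[OF i] Cons.prems(3)] by blast
  let ?F = "filter (\<lambda>x. x \<in> C i) w"
  obtain Ls R where LR: "FE w1 (concat (map Ls is) @ R)" "\<forall>i\<in>set is. set (Ls i) \<subseteq> C i \<and> length (Ls i) = tau (C i) w1"
    "set R \<subseteq> Y" "\<forall>i\<in>set is. tau (C i) R = 0" "\<forall>j\<in>{1..m}. j \<notin> set is \<longrightarrow> tau (C j) R = tau (C j) w1"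
    using Cons.IH[OF _ _ w1(2)] Cons.prems by auto
  define Ls' where "Ls' = Ls(i := ?F)"
  have ni: "i \<notin> set is" using Cons.prems by auto
  have cm: "concat (map Ls' (i # is)) = ?F @ concat (map Ls is)"
  proof -
    have "map Ls' is = map Ls is" using ni by (auto simp: Ls'_def)
    moreover have "Ls' i = ?F" by (simp add: Ls'_def)
    ultimately show ?thesis by (metis concat.simps(2) list.simps(9))
  qed
  have tw: "tau (C j) w = tau (C j) ?F + tau (C j) w1" if j: "j \<in> {1..m}" for j
    using fe_tauC[OF j w1(1)] by simp
  have tF: "tau (C j) ?F = 0" if j: "j \<in> {1..m}" "j \<noteq> i" for j
  proof (rule tau_zero)
    show "\<forall>x\<in>set ?F. x \<notin> C j"
    proof
      fix x assume "x \<in> set ?F"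
      then have "x \<in> C i" by simp
      then show "x \<notin> C j" using Cdisj[OF i j(1)] j(2) by blast
    qed
  qed
  have tw1: "tau (C i) w1 = 0" using w1(3) by (rule tau_zero)
  have "FE w (?F @ concat (map Ls is) @ R)" using fe_trans[OF w1(1) fe_pre[OF LR(1)]] .
  then have fe: "FE w (concat (map Ls' (i # is)) @ R)" using cm by simp
  have p2: "\<forall>i'\<in>set (i # is). set (Ls' i') \<subseteq> C i' \<and> length (Ls' i') = tau (C i') w"
  proof
    fix j assume j: "j \<in> set (i # is)"
    show "set (Ls' j) \<subseteq> C j \<and> length (Ls' j) = tau (C j) w"
    proof (cases "j = i")
      case True
      have "tau (C i) w = length ?F" using tw[OF i] tw1 by (simp add: tau_def)
      then show ?thesis using True by (auto simp: Ls'_def)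
    next
      case False
      then have jis: "j \<in> set is" and jm: "j \<in> {1..m}" using j Cons.prems(2) by auto
      then show ?thesis using LR(2) False tw[OF jm] tF[OF jm False] by (auto simp: Ls'_def)
    qed
  qed
  have p4: "\<forall>i'\<in>set (i # is). tau (C i') R = 0"
  proof
    fix j assume j: "j \<in> set (i # is)"
    show "tau (C j) R = 0"
    proof (cases "j = i")
      case True
      have "tau (C i) w1 = tau (C i) (concat (map Ls is) @ R)" using fe_tauC[OF i LR(1)] .
      then show ?thesis using tw1 True by simp
    next
      case False then show ?thesis using LR(4) j by auto
    qed
  qed
  have p5: "\<forall>j\<in>{1..m}. j \<notin> set (i # is) \<longrightarrow> tau (C j) R = tau (C j) w"
  proof (intro ballI impI)
    fix j assume j: "j \<in> {1..m}" "j \<notin> set (i # is)"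
    then have "j \<noteq> i" "j \<notin> set is" by auto
    then have "tau (C j) R = tau (C j) w1" using LR(5) j(1) by blast
    then show "tau (C j) R = tau (C j) w" using tw[OF j(1)] tF[OF j(1) \<open>j \<noteq> i\<close>] by simp
  qed
  show ?case using fe p2 LR(3) p4 p5 by blast
qed

lemma cls_conj:
  assumes j: "j \<in> {1..m}" and b: "b \<in> C j" and z: "z \<in> C j"
  shows "conjugate_in G b z"
proof -
  obtain c where c: "c \<in> carrier G" "C j = conj_class G c" using Ccls[OF j] by blast
  obtain g1 where g1: "g1 \<in> carrier G" "b = cj g1 c" using b c by (auto simp: conj_class_def)
  obtain g2 where g2: "g2 \<in> carrier G" "z = cj g2 c" using z c by (auto simp: conj_class_def)
  let ?g = "inv g1 \<otimes> g2"
  have "cj ?g b = z" using g1 g2 c cj_cj[of g1 ?g c] by (simp add: m_assoc[symmetric])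
  then show ?thesis using g1 g2 unfolding conjugate_in_def by (metis inv_closed m_closed)
qed

lemma gen_word:
  "g \<in> generate G Yp \<Longrightarrow> \<exists>zs c. set zs \<subseteq> Yp \<and> c \<in> carrier G \<and> central G c \<and> g = c \<otimes> lprod G zs"
proof (induction rule: generate.induct)
  case one
  show ?case by (rule exI[of _ "[]"], rule exI[of _ \<one>]) (simp add: central_one)
next
  case (incl z)
  have "z \<in> carrier G" using incl Yp_Y Yc by auto
  then show ?case by (intro exI[of _ "[z]"] exI[of _ \<one>]) (use incl in \<open>auto simp: central_one\<close>)
next
  case (inv z)
  then obtain j where j: "j \<in> {1..k}" "z \<in> C j" by auto
  have jm: "j \<in> {1..m}" using j km by auto
  have zc: "z \<in> carrier G" using j CY[OF jm] Yc by auto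
  define p where "p = pp j"
  have p1: "p \<ge> 1" and cen: "central G (z [^] p)" using pp_prop[OF jm] j by (auto simp: p_def)
  have pe: "z [^] p = z [^] (p - 1) \<otimes> z" using p1 zc by (cases p) auto
  have ie: "inv z = inv (z [^] p) \<otimes> z [^] (p - 1)"
  proof -
    have "inv (z [^] p) \<otimes> z [^] (p - 1) \<otimes> z = \<one>" using pe zc by (simp add: m_assoc)
    then show ?thesis using zc by (metis inv_equality m_closed nat_pow_closed inv_closed)
  qed
  have "set (replicate (p - 1) z) \<subseteq> Yp" using inv by auto
  moreover have "inv z = inv (z [^] p) \<otimes> lprod G (replicate (p - 1) z)" using ie lprod_rep zc by simp
  moreover have "central G (inv (z [^] p))" using central_inv[OF cen] zc by simp
  ultimately show ?case using zc by blast
next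
  case (eng g h)
  then obtain zs1 c1 zs2 c2 where a: "set zs1 \<subseteq> Yp" "c1 \<in> carrier G" "central G c1" "g = c1 \<otimes> lprod G zs1"
    "set zs2 \<subseteq> Yp" "c2 \<in> carrier G" "central G c2" "h = c2 \<otimes> lprod G zs2" by blast
  have s1: "set zs1 \<subseteq> carrier G" "set zs2 \<subseteq> carrier G" using a Yp_Y Ysub by auto
  let ?P1 = "lprod G zs1" and ?P2 = "lprod G zs2"
  have P: "?P1 \<in> carrier G" "?P2 \<in> carrier G" using s1 by auto
  have "g \<otimes> h = c1 \<otimes> (?P1 \<otimes> c2) \<otimes> ?P2" using a P by (simp add: m_assoc)
  also have "?P1 \<otimes> c2 = c2 \<otimes> ?P1" using a(7) P by (simp add: central_def)
  also have "c1 \<otimes> (c2 \<otimes> ?P1) \<otimes> ?P2 = (c1 \<otimes> c2) \<otimes> lprod G (zs1 @ zs2)"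
    using a P s1 by (simp add: m_assoc lprod_append)
  finally show ?case using a central_mult[of c1 c2] by (intro exI[of _ "zs1 @ zs2"] exI[of _ "c1 \<otimes> c2"]) auto
qed

lemma d0_single:
  assumes d0: "d_Y G Y Yp = 0" and i: "i \<in> {1..m}" and x: "x \<in> C i" and y': "y' \<in> C i"
  shows "y' = x"
proof -
  have xY: "x \<in> Y" and yY: "y' \<in> Y" using x y' CY[OF i] by auto
  have cj: "conjugate_in G x y'" using cls_conj[OF i x y'] .
  obtain g where g: "g \<in> generate G Yp" "y' = cj g x" using amp xY yY cj unfolding ample_def by blast
  obtain zs c where zc: "set zs \<subseteq> Yp" "c \<in> carrier G" "central G c" "g = c \<otimes> lprod G zs"
    using gen_word[OF g(1)] by blast
  have Pc: "lprod G zs \<in> carrier G" using zc(1) Yp_Y Ysub by (meson lprod_closed subset_trans)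
  have "y' = cj (lprod G zs) (cj c x)" using g(2) zc(4) cj_cj[of c "lprod G zs" x] zc(2) Pc xY Yc by simp
  also have "cj c x = x"
  proof -
    have "c \<otimes> x = x \<otimes> c" using zc(3) xY Yc by (simp add: central_def)
    then have "inv c \<otimes> (x \<otimes> c) = inv c \<otimes> (c \<otimes> x)" by simp
    then show ?thesis using zc(2) xY Yc by (simp add: m_assoc)
  qed
  finally have w: "y' = inv (lprod G zs) \<otimes> x \<otimes> lprod G zs" .
  let ?P = "\<lambda>r. \<exists>zs. length zs = r \<and> set zs \<subseteq> Yp \<and> y' = inv (lprod G zs) \<otimes> x \<otimes> lprod G zs"
  have ex: "?P (length zs)" using w zc(1) by blast
  let ?S = "{dist_Y G Yp y y' | y y'. y \<in> Y \<and> y' \<in> Y \<and> conjugate_in G y y'}"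
  have "?S \<subseteq> (\<lambda>(a, b). dist_Y G Yp a b) ` (Y \<times> Y)" by auto
  moreover have "finite ((\<lambda>(a, b). dist_Y G Yp a b) ` (Y \<times> Y))"
    using finY by (intro finite_imageI finite_cartesian_product)
  ultimately have finS: "finite ?S" by (rule finite_subset)
  have "dist_Y G Yp x y' \<in> ?S" using xY yY cj by blast
  then have "dist_Y G Yp x y' \<le> Max ?S" by (rule Max_ge[OF finS])
  then have "dist_Y G Yp x y' \<le> 0" using d0 unfolding d_Y_def by simp
  then have "(LEAST r. ?P r) = 0" unfolding dist_Y_def by simp
  moreover have "?P (LEAST r. ?P r)" using LeastI[of ?P, OF ex] .
  ultimately have "?P 0" by simp
  then show ?thesis using xY Yc by auto
qed

end


context st
begin

lemma setk: "set [1..<k+1] = {1..k}" by auto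

abbreviation Apart where "Apart s \<equiv> concat (map (\<lambda>i. replicate (tau (C i) s) (yy i 1)) [k+1..<m+1])"

lemma setSS: "set SS \<subseteq> Y" "Yp \<subseteq> set SS"
proof -
  show "set SS \<subseteq> Y"
  proof
    fix x assume "x \<in> set SS"
    then have "\<exists>i\<in>set [1..<k+1]. x \<in> set (Si i)" unfolding SS_def by (simp only: set_concat set_map) blast
    then obtain i where i: "i \<in> {1..k}" "x \<in> set (Si i)" unfolding setk by blast
    then have im: "i \<in> {1..m}" using km by auto
    then show "x \<in> Y" using set_Si[OF im] i CY[OF im] by auto
  qed
  show "Yp \<subseteq> set SS"
  proof
    fix x assume "x \<in> Yp"
    then obtain i where i: "i \<in> {1..k}" "x \<in> C i" by auto
    then have im: "i \<in> {1..m}" using km by auto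
    obtain j where j: "j \<in> {1..nn i}" "x = yy i j" using yy_img[OF im] i by blast
    have "pp i \<ge> 1" using pp_prop[OF im] by auto
    then have "x \<in> set (Si i)" using j by (auto simp: Si_def)
    then show "x \<in> set SS" using i by (auto simp: SS_def)
  qed
qed

lemma central_SS: "central G (lprod G SS)"
  unfolding SS_def
proof (rule lprod_concat_central, intro ballI conjI)
  fix x assume "x \<in> set (map Si [1..<k+1])"
  then obtain i where i: "i \<in> {1..k}" "x = Si i" unfolding set_map setk by blast
  then have im: "i \<in> {1..m}" using km by auto
  show "set x \<subseteq> carrier G" using i set_Si[OF im] CY[OF im] Ysub by auto
  show "central G (lprod G x)" unfolding i(2) Si_def
  proof (rule lprod_concat_central, intro ballI conjI)
    fix b assume "b \<in> set (map (\<lambda>j. replicate (pp i) (yy i j)) [1..<nn i + 1])"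
    then obtain j where j0: "j \<in> set [1..<nn i + 1]" "b = replicate (pp i) (yy i j)"
      unfolding set_map by blast
    then have j: "j \<in> {1..nn i}" "b = replicate (pp i) (yy i j)" by auto
    have y: "yy i j \<in> C i" using yy_in[OF im j(1)] .
    then have yc: "yy i j \<in> carrier G" using CY[OF im] Yc by auto
    show "set b \<subseteq> carrier G" using j yc by auto
    show "central G (lprod G b)" using j lprod_rep[OF yc] pp_prop[OF im] y by auto
  qed
qed

lemma central_T: "central G (lprod G (concat (replicate d SS)))"
  by (rule lprod_concat_central) (use setSS(1) Ysub central_SS in auto)

lemma main_pos:
  assumes s: "set s \<subseteq> Y" and gen: "generate G (set s) = carrier G" and d1: "d \<ge> 1"
    and big: "\<forall>i\<in>{1..k}. tau (C i) s \<ge> 2 * nn i * pp i * d + 1"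
  shows "\<exists>s1. set s1 \<subseteq> Y \<and> (\<forall>i\<in>{k+1..m}. tau (C i) s1 = 0) \<and>
     FE s (Apart s @ concat (replicate d SS) @ s1)"
proof -
  let ?T = "concat (replicate d SS)"
  have TY: "set ?T \<subseteq> Y" using setSS(1) by auto
  have YT: "Yp \<subseteq> set ?T" using setSS(2) d1 by (cases d) auto
  have big2: "\<forall>i\<in>{1..k}. tau (C i) s \<ge> d * nn i * pp i + nn i * pp i + 1"
  proof
    fix i assume i: "i \<in> {1..k}"
    have "d * nn i * pp i \<ge> nn i * pp i" using d1 by simp
    then have "2 * nn i * pp i * d \<ge> d * nn i * pp i + nn i * pp i" by (simp add: algebra_simps)
    moreover have "2 * nn i * pp i * d + 1 \<le> tau (C i) s" using big i by blast
    ultimately show "tau (C i) s \<ge> d * nn i * pp i + nn i * pp i + 1" by linarith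
  qed
  obtain W1 where W1: "FE s (?T @ W1)" "set W1 \<subseteq> Y" "generate G (set W1) = carrier G"
    "\<forall>j\<in>{1..m}. tau (C j) W1 + (if j \<le> k then d * nn j * pp j else 0) = tau (C j) s"
    using extract_Sd[OF s gen big2] by blast
  have dis: "distinct [k+1..<m+1]" "set [k+1..<m+1] \<subseteq> {1..m}" by auto
  obtain Ls R where LR: "FE W1 (concat (map Ls [k+1..<m+1]) @ R)"
    "\<forall>i\<in>set [k+1..<m+1]. set (Ls i) \<subseteq> C i \<and> length (Ls i) = tau (C i) W1"
    "set R \<subseteq> Y" "\<forall>i\<in>set [k+1..<m+1]. tau (C i) R = 0"
    "\<forall>j\<in>{1..m}. j \<notin> set [k+1..<m+1] \<longrightarrow> tau (C j) R = tau (C j) W1"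
    using gather_classes[OF dis W1(2)] by blast
  let ?A0 = "concat (map Ls [k+1..<m+1])"
  have A0Y: "set ?A0 \<subseteq> Y"
  proof
    fix x assume "x \<in> set ?A0"
    then obtain i where i: "i \<in> set [k+1..<m+1]" "x \<in> set (Ls i)" by auto
    then have "i \<in> {1..m}" by auto
    moreover have "x \<in> C i" using LR(2) i by blast
    ultimately show "x \<in> Y" using CY by blast
  qed
  have goodR: "good R" unfolding good_def
  proof (intro conjI ballI)
    show "set R \<subseteq> Y" by (rule LR(3))
  next
    fix i assume "i \<in> {k+1..m}"
    then have "i \<in> set [k+1..<m+1]" by auto
    then show "tau (C i) R = 0" using LR(4) by blast
  next
    fix j assume j: "j \<in> {1..k}"
    then have jm: "j \<in> {1..m}" and jn: "j \<notin> set [k+1..<m+1]" using km by auto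
    have e1: "tau (C j) R = tau (C j) W1" using LR(5) jm jn by blast
    have e2: "tau (C j) W1 + (if j \<le> k then d * nn j * pp j else 0) = tau (C j) s" using W1(4) jm by blast
    have e3: "tau (C j) s \<ge> 2 * nn j * pp j * d + 1" using big j by blast
    have a1: "pp j * 1 \<le> pp j * d" using d1 by (rule mult_le_mono2)
    have a2: "nn j * (pp j - 1) \<le> nn j * (pp j * d)" by (rule mult_le_mono2) (use a1 in linarith)
    have "nn j * (pp j - 1) \<le> nn j * pp j * d" using a2 by (simp add: mult.assoc)
    have jk: "j \<le> k" using j by auto
    have e2': "tau (C j) W1 + nn j * pp j * d = tau (C j) s" using e2 jk by (simp add: mult.commute mult.left_commute)
    show "nn j * (pp j - 1) < tau (C j) R"
      using e1 e2' e3 \<open>nn j * (pp j - 1) \<le> nn j * pp j * d\<close> by linarith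
  qed
  have "FE s (?T @ ?A0 @ R)" using fe_trans[OF W1(1) fe_pre[OF LR(1)]] .
  also have "FE (?T @ ?A0 @ R) (?A0 @ ?T @ R)"
    using fe_app[OF comm_central[OF central_T TY A0Y], of R] by simp
  finally have fe1: "FE s (?A0 @ ?T @ R)" .
  define f where "f x = yy (SOME i. i \<in> {1..m} \<and> x \<in> C i) 1" for x
  have fi: "f x = yy i 1" if "i \<in> {1..m}" "x \<in> C i" for x i
  proof -
    have "(SOME i. i \<in> {1..m} \<and> x \<in> C i) = i"
    proof (rule some_equality)
      show "i \<in> {1..m} \<and> x \<in> C i" using that by simp
      fix i' assume "i' \<in> {1..m} \<and> x \<in> C i'"
      then show "i' = i" using Cdisj[of i' i x] that by blast
    qed
    then show ?thesis by (simp add: f_def)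
  qed
  have fg: "\<forall>c\<in>set ?A0. \<exists>g\<in>generate G Yp. f c = cj g c"
  proof
    fix c assume "c \<in> set ?A0"
    then obtain i where i: "i \<in> set [k+1..<m+1]" "c \<in> set (Ls i)" by auto
    then have im: "i \<in> {1..m}" and ci: "c \<in> C i" using LR(2) by auto
    have "yy i 1 \<in> C i" using yy_in[OF im] nn_pos[OF im] by auto
    then obtain g where "g \<in> generate G Yp" "yy i 1 = cj g c" using ample_g[OF im ci] by blast
    then show "\<exists>g\<in>generate G Yp. f c = cj g c" using fi[OF im ci] by auto
  qed
  obtain R' where R': "good R'" "FE (?A0 @ ?T @ R) (map f ?A0 @ ?T @ R')"
    using conv_list[OF TY YT fg A0Y goodR] by blast
  have "map f ?A0 = Apart s"
  proof -
    have "map f ?A0 = concat (map (\<lambda>i. map f (Ls i)) [k+1..<m+1])" by (simp add: map_concat o_def)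
    also have "\<dots> = Apart s"
    proof (rule arg_cong[where f=concat], rule map_cong[OF refl])
      fix i assume i: "i \<in> set [k+1..<m+1]"
      then have im: "i \<in> {1..m}" and ik: "\<not> i \<le> k" by auto
      have "tau (C i) W1 + (if i \<le> k then d * nn i * pp i else 0) = tau (C i) s" using W1(4) im by blast
      then have "tau (C i) W1 = tau (C i) s" using ik by simp
      moreover have "length (Ls i) = tau (C i) W1" using LR(2) i by blast
      ultimately have len: "length (Ls i) = tau (C i) s" by simp
      have LsC: "set (Ls i) \<subseteq> C i" using LR(2) i by blast
      have "\<forall>x\<in>set (Ls i). f x = yy i 1"
      proof
        fix x assume "x \<in> set (Ls i)"
        then have "x \<in> C i" using LsC by blast
        then show "f x = yy i 1" by (rule fi[OF im])
      qed
      then show "map f (Ls i) = replicate (tau (C i) s) (yy i 1)" using map_const_rep len by metis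
    qed
    finally show ?thesis .
  qed
  then have "FE s (Apart s @ ?T @ R')" using fe_trans[OF fe1 R'(2)] by simp
  then show ?thesis using R'(1) unfolding good_def by blast
qed

lemma main_zero:
  assumes s: "set s \<subseteq> Y" and d0: "d_Y G Y Yp = 0"
  shows "\<exists>s1. set s1 \<subseteq> Y \<and> (\<forall>i\<in>{k+1..m}. tau (C i) s1 = 0) \<and>
     FE s (Apart s @ concat (replicate 0 SS) @ s1)"
proof -
  have dis: "distinct [k+1..<m+1]" "set [k+1..<m+1] \<subseteq> {1..m}" by auto
  obtain Ls R where LR: "FE s (concat (map Ls [k+1..<m+1]) @ R)"
    "\<forall>i\<in>set [k+1..<m+1]. set (Ls i) \<subseteq> C i \<and> length (Ls i) = tau (C i) s"
    "set R \<subseteq> Y" "\<forall>i\<in>set [k+1..<m+1]. tau (C i) R = 0"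
    using gather_classes[OF dis s] by blast
  have "concat (map Ls [k+1..<m+1]) = Apart s"
  proof (rule arg_cong[where f=concat], rule map_cong[OF refl])
    fix i assume i: "i \<in> set [k+1..<m+1]"
    then have im: "i \<in> {1..m}" by auto
    have y1: "yy i 1 \<in> C i" using yy_in[OF im] nn_pos[OF im] by auto
    have "\<forall>x\<in>set (Ls i). x = yy i 1"
    proof
      fix x assume "x \<in> set (Ls i)"
      then have "x \<in> C i" using LR(2) i by blast
      then show "x = yy i 1" using d0_single[OF d0 im y1] by blast
    qed
    then have "map (\<lambda>x. x) (Ls i) = replicate (length (Ls i)) (yy i 1)" by (intro map_const_rep) auto
    then show "Ls i = replicate (tau (C i) s) (yy i 1)" using LR(2) i by simp
  qed
  then show ?thesis using LR by auto
qed

end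

theorem proposition2p10:
  fixes G :: "('a, 'b) monoid_scheme"
    and Y :: "'a set"
    and C :: "nat \<Rightarrow> 'a set"
    and y :: "nat \<Rightarrow> nat \<Rightarrow> 'a"
    and m k :: nat
    and s :: "'a list"
  assumes CG: "finite_C_group G Y"
    and classes: "\<forall>i\<in>{1..m}. \<exists>c\<in>carrier G. C i = conj_class G c"
    and disj: "\<forall>i\<in>{1..m}. \<forall>j\<in>{1..m}. i \<noteq> j \<longrightarrow> C i \<inter> C j = {}"
    and cover: "Y = (\<Union>i\<in>{1..m}. C i)"
    and enum: "\<forall>i\<in>{1..m}. bij_betw (y i) {1..card (C i)} (C i)"
    and km: "k \<le> m"
    and amp: "ample G Y (\<Union>i\<in>{1..k}. C i)"
    and s_in: "set s \<subseteq> Y"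
    and s_gen: "generate G (set s) = carrier G"
    and tau_big: "\<forall>i\<in>{1..k}. tau (C i) s \<ge>
                    2 * card (C i) * cls_p G (C i) * d_Y G Y (\<Union>i\<in>{1..k}. C i) + 1"
  shows "\<exists>s1. set s1 \<subseteq> Y \<and> (\<forall>i\<in>{k+1..m}. tau (C i) s1 = 0) \<and>
           fact_eq G Y s
             (concat (map (\<lambda>i. replicate (tau (C i) s) (y i 1)) [k+1..<m+1])
              @ concat (replicate (d_Y G Y (\<Union>i\<in>{1..k}. C i))
                  (concat (map (\<lambda>i. concat (map (\<lambda>j. replicate (cls_p G (C i)) (y i j))
                                                  [1..<card (C i) + 1]))
                               [1..<k+1])))
              @ s1)"
proof -
  have grp: "group G" and Ysub: "Y \<subseteq> carrier G" and finY: "finite Y"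
    and Yconj: "\<forall>y\<in>Y. \<forall>g\<in>carrier G. inv\<^bsub>G\<^esub> g \<otimes>\<^bsub>G\<^esub> y \<otimes>\<^bsub>G\<^esub> g \<in> Y"
    and genY: "generate G Y = carrier G"
    using CG unfolding finite_C_group_def by auto
  have "st G Y C y m k"
    unfolding st_def st_axioms_def qg_def qg_axioms_def
  proof (intro conjI)
    show "\<forall>y g. y \<in> Y \<longrightarrow> g \<in> carrier G \<longrightarrow> inv\<^bsub>G\<^esub> g \<otimes>\<^bsub>G\<^esub> y \<otimes>\<^bsub>G\<^esub> g \<in> Y"
      using Yconj by blast
  qed (fact grp Ysub finY genY classes disj cover enum km amp)+
  then interpret st G Y C y m k .
  let ?d = "d_Y G Y (\<Union>i\<in>{1..k}. C i)"
  have SSe: "concat (map (\<lambda>i. concat (map (\<lambda>j. replicate (cls_p G (C i)) (y i j))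
                                                  [1..<card (C i) + 1])) [1..<k+1]) = SS"
    by (simp add: SS_def Si_def[abs_def])
  show ?thesis
  proof (cases "?d = 0")
    case True
    from main_zero[OF s_in True] show ?thesis unfolding SSe True by simp
  next
    case False
    then have "?d \<ge> 1" by simp
    from main_pos[OF s_in s_gen this tau_big] show ?thesis unfolding SSe .
  qed
qed


end
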